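(* For every $n\ge1$, the number of permutations in $\mathcal S_n$ avoiding $(321,\{1\},\{1\})$ equals the number of upper triangular binary matrices with exactly $n+1$ entries equal to $1$ and with no zero rows or columns, and it also equals the number of permutations in $\mathcal S_{n+1}$ avoiding both $(231,\{1\},\{1\})$ and $(21,\{1\},\{1\})$.
   Context: For $n\ge1$, $\mathcal S_n$ is the set of permutations $\pi=\pi_1\cdots\pi_n$ of $[n]$. A bi-vincular pattern of length $k$ is a triple $p=(\sigma,X,Y)$ with $\sigma\in\mathcal S_k$ and $X,Y\subseteq\{0,1,\dots,k\}$. A permutation $\pi\in\mathcal S_n$ contains $p$ if there are indices $1\le i_1<\dots<i_k\le n$ such that $(\pi_{i_1},\dots,\pi_{i_k})$ is order-isomorphic to $\sigma$ and, letting $j_1<\dots<j_k$ be the values $\pi_{i_1},\dots,\pi_{i_k}$ sorted increasingly and setting $i_0=j_0=0$, $i_{k+1}=j_{k+1}=n+1$, one has $i_{x+1}=i_x+1$ for all $x\in X$ and $j_{y+1}=j_y+1$ for all $y\in Y$. Otherwise $\pi$ avoids $p$. An upper triangular binary matrix is a square matrix (of any size) with entries in $\{0,1\}$ whose entries below the main diagonal are all $0$; matrices of all sizes are counted. *)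

theory Defs
  imports "HOL-Combinatorics.Permutations"
begin

text \<open>Permutations of [n] are functions nat => nat that permute {1..n}
(and fix everything else). A pattern permutation of length k is given by
the list of its values.\<close>

definition perm_of_list :: "nat list \<Rightarrow> nat \<Rightarrow> nat" where
  "perm_of_list l = (\<lambda>i. if 1 \<le> i \<and> i \<le> length l then l ! (i - 1) else i)"

definition ext_seq :: "nat \<Rightarrow> nat \<Rightarrow> (nat \<Rightarrow> nat) \<Rightarrow> nat \<Rightarrow> nat" where
  "ext_seq n k f t = (if t = 0 then 0 else if t = k + 1 then n + 1 else f t)"

text \<open>pi in S_n contains the bi-vincular pattern (sigma, X, Y) of length k.
 iota gives the positions i_1 < ... < i_k, j gives the occurring values sorted increasingly.\<close>
definition contains_bv ::
  "nat \<Rightarrow> (nat \<Rightarrow> nat) \<Rightarrow> nat \<Rightarrow> (nat \<Rightarrow> nat) \<Rightarrow> nat set \<Rightarrow> nat set \<Rightarrow> bool" where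
  "contains_bv n \<pi> k \<sigma> X Y \<longleftrightarrow>
     (\<exists>\<iota> j. strict_mono_on {1..k} \<iota> \<and> \<iota> ` {1..k} \<subseteq> {1..n}
        \<and> (\<forall>a\<in>{1..k}. \<forall>b\<in>{1..k}. \<pi> (\<iota> a) < \<pi> (\<iota> b) \<longleftrightarrow> \<sigma> a < \<sigma> b)
        \<and> strict_mono_on {1..k} j \<and> j ` {1..k} = (\<lambda>a. \<pi> (\<iota> a)) ` {1..k}
        \<and> (\<forall>x\<in>X. ext_seq n k \<iota> (x + 1) = ext_seq n k \<iota> x + 1)
        \<and> (\<forall>y\<in>Y. ext_seq n k j (y + 1) = ext_seq n k j y + 1))"

definition avoids_bv ::
  "nat \<Rightarrow> (nat \<Rightarrow> nat) \<Rightarrow> nat list \<Rightarrow> nat set \<Rightarrow> nat set \<Rightarrow> bool" where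
  "avoids_bv n \<pi> s X Y \<longleftrightarrow> \<not> contains_bv n \<pi> (length s) (perm_of_list s) X Y"

text \<open>Upper triangular binary matrices of size m (any m), represented as (m, A) with
 A i j the entry in row i, column j (1 <= i, j <= m), A zero outside the m x m range.\<close>
definition upper_tri_bin :: "nat \<Rightarrow> (nat \<Rightarrow> nat \<Rightarrow> nat) \<Rightarrow> bool" where
  "upper_tri_bin m A \<longleftrightarrow>
     (\<forall>i j. A i j \<in> {0, 1})
     \<and> (\<forall>i j. \<not> (1 \<le> i \<and> i \<le> m \<and> 1 \<le> j \<and> j \<le> m) \<longrightarrow> A i j = 0)
     \<and> (\<forall>i j. j < i \<longrightarrow> A i j = 0)"

definition ones :: "(nat \<Rightarrow> nat \<Rightarrow> nat) \<Rightarrow> (nat \<times> nat) set" where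
  "ones A = {(i, j). A i j = 1}"

definition no_zero_lines :: "nat \<Rightarrow> (nat \<Rightarrow> nat \<Rightarrow> nat) \<Rightarrow> bool" where
  "no_zero_lines m A \<longleftrightarrow>
     (\<forall>i\<in>{1..m}. \<exists>j\<in>{1..m}. A i j = 1) \<and> (\<forall>j\<in>{1..m}. \<exists>i\<in>{1..m}. A i j = 1)"

end

theory Submission
  imports Defs
begin


fun G :: "nat \<Rightarrow> nat \<Rightarrow> nat \<Rightarrow> nat" where
  "G 0 k p = 1"
| "G (Suc m) k p = (\<Sum>q\<in>{1..p}. G m k (q - 1)) + (\<Sum>q\<in>{p<..k}. G m (Suc k) q)"

lemma engine:
  fixes S :: "nat \<Rightarrow> 'a set" and ch :: "'a \<Rightarrow> 'a set" and lab :: "'a \<Rightarrow> nat \<times> nat"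
  assumes step: "\<And>n. n \<ge> 1 \<Longrightarrow> S (Suc n) = (\<Union>x\<in>S n. ch x)"
    and disj: "\<And>n x y. n \<ge> 1 \<Longrightarrow> x \<in> S n \<Longrightarrow> y \<in> S n \<Longrightarrow> x \<noteq> y \<Longrightarrow> ch x \<inter> ch y = {}"
    and finch: "\<And>n x. n \<ge> 1 \<Longrightarrow> x \<in> S n \<Longrightarrow> finite (ch x)"
    and sumG: "\<And>n x m. n \<ge> 1 \<Longrightarrow> x \<in> S n \<Longrightarrow>
        (\<Sum>c\<in>ch x. G m (fst (lab c)) (snd (lab c))) = G (Suc m) (fst (lab x)) (snd (lab x))"
    and root: "S 1 = {r}" "lab r = (2,1)"
  shows "card (S (Suc j)) = G j 2 1"
proof -
  have fin: "finite (S (Suc i))" for i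
  proof (induction i)
    case 0 then show ?case using root by simp
  next
    case (Suc i)
    then show ?case using step[of "Suc i"] finch[of "Suc i"] by auto
  qed
  define F where "F i m = (\<Sum>x\<in>S (Suc i). G m (fst (lab x)) (snd (lab x)))" for i m
  have FS: "F (Suc i) m = F i (Suc m)" for i m
  proof -
    have "F (Suc i) m = (\<Sum>x\<in>(\<Union>x\<in>S (Suc i). ch x). G m (fst (lab x)) (snd (lab x)))"
      unfolding F_def using step[of "Suc i"] by simp
    also have "\<dots> = (\<Sum>x\<in>S (Suc i). \<Sum>c\<in>ch x. G m (fst (lab c)) (snd (lab c)))"
      by (rule sum.UNION_disjoint) (use fin finch[of "Suc i"] disj[of "Suc i"] in auto)
    also have "\<dots> = F i (Suc m)" unfolding F_def using sumG[of "Suc i"] by simp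
    finally show ?thesis .
  qed
  have "F i m = F 0 (i + m)" for i m
    by (induction i arbitrary: m) (auto simp: FS)
  then have "F j 0 = F 0 j" by (metis add.right_neutral)
  moreover have "F j 0 = card (S (Suc j))" unfolding F_def by simp
  moreover have "F 0 j = G j 2 1" unfolding F_def using root by simp
  ultimately show ?thesis by simp
qed


lemma sum_split_if:
  assumes "p \<le> (k::nat)"
  shows "(\<Sum>q\<in>{1..k}. if q \<le> p then f q else g q) = (\<Sum>q\<in>{1..p}. f q) + (\<Sum>q\<in>{p<..k}. (g q :: nat))"
proof -
  have "{1..k} = {1..p} \<union> {p<..k}" using assms by (auto simp: set_eq_iff)
  then have "(\<Sum>q\<in>{1..k}. if q \<le> p then f q else g q) =
     (\<Sum>q\<in>{1..p}. if q \<le> p then f q else g q) + (\<Sum>q\<in>{p<..k}. if q \<le> p then f q else g q)"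
    by (simp add: sum.union_disjoint ivl_disj_int)
  also have "\<dots> = (\<Sum>q\<in>{1..p}. f q) + (\<Sum>q\<in>{p<..k}. g q)"
    by (intro arg_cong2[where f="(+)"] sum.cong) auto
  finally show ?thesis .
qed

lemma sumG_bij:
  assumes bij: "bij_betw \<phi> A {1..k}" and pk: "p \<le> k" and inj: "inj_on c A"
    and lab: "\<And>v. v \<in> A \<Longrightarrow> lab (c v) = (if \<phi> v \<le> p then (k, \<phi> v - 1) else (Suc k, \<phi> v))"
  shows "(\<Sum>x\<in>c ` A. G m (fst (lab x)) (snd (lab x))) = G (Suc m) k p"
proof -
  have "(\<Sum>x\<in>c ` A. G m (fst (lab x)) (snd (lab x))) = (\<Sum>v\<in>A. G m (fst (lab (c v))) (snd (lab (c v))))"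
    using inj by (simp add: sum.reindex)
  also have "\<dots> = (\<Sum>v\<in>A. (\<lambda>q. if q \<le> p then G m k (q - 1) else G m (Suc k) q) (\<phi> v))"
    by (rule sum.cong) (auto simp: lab)
  also have "\<dots> = (\<Sum>q\<in>{1..k}. if q \<le> p then G m k (q - 1) else G m (Suc k) q)"
    using sum.reindex_bij_betw[OF bij, of "\<lambda>q. if q \<le> p then G m k (q - 1) else G m (Suc k) q"] by simp
  also have "\<dots> = G (Suc m) k p" using sum_split_if[OF pk] by simp
  finally show ?thesis .
qed

definition rk :: "nat set \<Rightarrow> nat \<Rightarrow> nat" where
  "rk A v = card {w\<in>A. w \<le> v}"

lemma rk_mono: "finite A \<Longrightarrow> v \<le> u \<Longrightarrow> rk A v \<le> rk A u"
  unfolding rk_def by (intro card_mono) auto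

lemma rk_less: "finite A \<Longrightarrow> v \<in> A \<Longrightarrow> u < v \<Longrightarrow> rk A u < rk A v"
  unfolding rk_def
proof (intro psubset_card_mono)
  assume "finite A" "v \<in> A" "u < v"
  then have "v \<in> {w \<in> A. w \<le> v}" "v \<notin> {w \<in> A. w \<le> u}" by auto
  then show "{w \<in> A. w \<le> u} \<subset> {w \<in> A. w \<le> v}" by auto
qed auto

lemma rk_le_iff: "finite A \<Longrightarrow> v \<in> A \<Longrightarrow> (rk A v \<le> rk A u) = (v \<le> u)"
  using rk_less[of A v u] rk_mono[of A v u] by (metis leD leI)

lemma rk_pos: "finite A \<Longrightarrow> v \<in> A \<Longrightarrow> rk A v \<ge> 1"
  proof -
  assume "finite A" "v \<in> A"
  then have "{v} \<subseteq> {w\<in>A. w \<le> v}" "finite {w\<in>A. w \<le> v}" by auto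
  then have "card {v} \<le> card {w\<in>A. w \<le> v}" by (rule card_mono[rotated])
  then show ?thesis unfolding rk_def by simp
qed

lemma rk_le_card: "finite A \<Longrightarrow> rk A v \<le> card A"
  unfolding rk_def by (intro card_mono) auto

lemma rk_bij: assumes "finite A" shows "bij_betw (rk A) A {1..card A}"
proof -
  have inj: "inj_on (rk A) A"
    by (rule inj_onI) (metis assms le_antisym rk_le_iff order_refl)
  have "rk A ` A \<subseteq> {1..card A}" using rk_pos rk_le_card assms by auto
  moreover have "card (rk A ` A) = card {1..card A}" using card_image[OF inj] by simp
  ultimately have "rk A ` A = {1..card A}" by (simp add: card_subset_eq)
  then show ?thesis using inj by (simp add: bij_betw_def)
qed


lemma set123: "{1..3::nat} = {1,2,3}" "{Suc 0..3::nat} = {1,2,3}" by auto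
lemma set12: "{1..2::nat} = {1,2}" "{Suc 0..2::nat} = {1,2}" by auto

lemma pol321: "perm_of_list [3,2,1] 1 = 3" "perm_of_list [3,2,1] 2 = 2" "perm_of_list [3,2,1] 3 = 1"
  by (auto simp: perm_of_list_def)
lemma pol231: "perm_of_list [2,3,1] 1 = 2" "perm_of_list [2,3,1] 2 = 3" "perm_of_list [2,3,1] 3 = 1"
  by (auto simp: perm_of_list_def)
lemma pol21: "perm_of_list [2,1] 1 = 2" "perm_of_list [2,1] 2 = 1"
  by (auto simp: perm_of_list_def)

lemma smono3: "strict_mono_on {1..3::nat} f \<longleftrightarrow> f 1 < f 2 \<and> f 2 < (f 3::nat)"
  unfolding strict_mono_on_def set123 by auto
lemma smono2: "strict_mono_on {1..2::nat} f \<longleftrightarrow> f 1 < (f 2::nat)"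
  unfolding strict_mono_on_def set12 by auto

lemma ext3: "ext_seq n 3 f 2 = f 2" "ext_seq n 3 f 1 = f 1"
  by (auto simp: ext_seq_def)
lemma ext2: "ext_seq n 2 f 2 = f 2" "ext_seq n 2 f 1 = f 1"
  by (auto simp: ext_seq_def)

lemma three_sorted:
  fixes a b c x y z :: nat
  assumes "x < y" "y < z" "a < b" "b < c" "{x,y,z} = {a,b,c}"
  shows "x = a \<and> y = b \<and> z = c"
proof -
  have xa: "x \<in> {a,b,c}" "a \<in> {x,y,z}" "z \<in> {a,b,c}" "c \<in> {x,y,z}" "y \<in> {a,b,c}"
    using assms(5) by blast+
  have "x = a" using xa(1,2) assms(1-4) by auto
  moreover have "z = c" using xa(3,4) assms(1-4) by auto
  moreover have "y = b" using xa(5) assms(1-4) \<open>x = a\<close> \<open>z = c\<close> by auto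
  ultimately show ?thesis by simp
qed

lemma avoid321_iff:
  "avoids_bv n \<pi> [3,2,1] {1} {1} \<longleftrightarrow>
   \<not> (\<exists>i c. 1 \<le> i \<and> Suc i < c \<and> c \<le> n \<and> \<pi> (Suc i) < \<pi> i \<and> \<pi> (Suc i) = Suc (\<pi> c))"
proof -
  have "contains_bv n \<pi> 3 (perm_of_list [3,2,1]) {1} {1} \<longleftrightarrow>
   (\<exists>i c. 1 \<le> i \<and> Suc i < c \<and> c \<le> n \<and> \<pi> (Suc i) < \<pi> i \<and> \<pi> (Suc i) = Suc (\<pi> c))"
  proof
    assume "contains_bv n \<pi> 3 (perm_of_list [3,2,1]) {1} {1}"
    then obtain \<iota> j :: "nat \<Rightarrow> nat" where A: "strict_mono_on {1..3} \<iota>" "\<iota> ` {1..3} \<subseteq> {1..n}"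
      "\<forall>a\<in>{1..3}. \<forall>b\<in>{1..3}. \<pi> (\<iota> a) < \<pi> (\<iota> b) \<longleftrightarrow> perm_of_list [3,2,1] a < perm_of_list [3,2,1] b"
      "strict_mono_on {1..3} j" "j ` {1..3} = (\<lambda>a. \<pi> (\<iota> a)) ` {1..3}"
      "\<forall>x\<in>{1}. ext_seq n 3 \<iota> (x + 1) = ext_seq n 3 \<iota> x + 1"
      "\<forall>y\<in>{1}. ext_seq n 3 j (y + 1) = ext_seq n 3 j y + 1"
      unfolding contains_bv_def by auto
    have i1: "\<iota> 1 < \<iota> 2" "\<iota> 2 < \<iota> 3" using strict_mono_onD[OF A(1), of 1 2] strict_mono_onD[OF A(1), of 2 3] by simp_all
    have j1: "j 1 < j 2" "j 2 < j 3" using strict_mono_onD[OF A(4), of 1 2] strict_mono_onD[OF A(4), of 2 3] by simp_all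
    have i2: "\<iota> 1 \<ge> 1" "\<iota> 3 \<le> n" using A(2) unfolding image_subset_iff
      by (auto dest!: bspec[of _ _ 1] bspec[of _ _ 3])
    have j2: "{j 1, j 2, j 3} = {\<pi> (\<iota> 1), \<pi> (\<iota> 2), \<pi> (\<iota> 3)}" using A(5) by (simp add: set123)
    have x: "\<iota> 2 = \<iota> 1 + 1" and y: "j 2 = j 1 + 1" using A(6,7) by (auto simp: ext_seq_def numeral_2_eq_2 numeral_3_eq_3)
    have o: "\<pi> (\<iota> 2) < \<pi> (\<iota> 1)" "\<pi> (\<iota> 3) < \<pi> (\<iota> 2)"
      using A(3) by (auto simp: perm_of_list_def set123 dest!: bspec[of _ _ 1] bspec[of _ _ 2] bspec[of _ _ 3])
    have "{j 1, j 2, j 3} = {\<pi> (\<iota> 3), \<pi> (\<iota> 2), \<pi> (\<iota> 1)}" using j2 by auto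
    then have "j 1 = \<pi> (\<iota> 3) \<and> j 2 = \<pi> (\<iota> 2)"
      using three_sorted[OF j1 o(2) o(1)] by blast
    then show "\<exists>i c. 1 \<le> i \<and> Suc i < c \<and> c \<le> n \<and> \<pi> (Suc i) < \<pi> i \<and> \<pi> (Suc i) = Suc (\<pi> c)"
      using i1 i2 x y o by (intro exI[of _ "\<iota> 1"] exI[of _ "\<iota> 3"]) auto
  next
    assume "\<exists>i c. 1 \<le> i \<and> Suc i < c \<and> c \<le> n \<and> \<pi> (Suc i) < \<pi> i \<and> \<pi> (Suc i) = Suc (\<pi> c)"
    then obtain i c where h: "1 \<le> i" "Suc i < c" "c \<le> n" "\<pi> (Suc i) < \<pi> i" "\<pi> (Suc i) = Suc (\<pi> c)" by blast
    define \<iota> where "\<iota> t = (if t = 1 then i else if t = 2 then Suc i else c)" for t :: nat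
    define j where "j t = (if t = 1 then \<pi> c else if t = 2 then \<pi> (Suc i) else \<pi> i)" for t :: nat
    show "contains_bv n \<pi> 3 (perm_of_list [3,2,1]) {1} {1}"
      unfolding contains_bv_def
      apply (rule exI[of _ \<iota>], rule exI[of _ j])
      using h by (auto simp: strict_mono_on_def set123 \<iota>_def j_def perm_of_list_def ext_seq_def)
  qed
  then show ?thesis unfolding avoids_bv_def by (simp add: eval_nat_numeral)
qed

lemma avoid231_iff:
  "avoids_bv n \<pi> [2,3,1] {1} {1} \<longleftrightarrow>
   \<not> (\<exists>i c. 1 \<le> i \<and> Suc i < c \<and> c \<le> n \<and> \<pi> i < \<pi> (Suc i) \<and> \<pi> i = Suc (\<pi> c))"
proof -
  have "contains_bv n \<pi> 3 (perm_of_list [2,3,1]) {1} {1} \<longleftrightarrow>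
   (\<exists>i c. 1 \<le> i \<and> Suc i < c \<and> c \<le> n \<and> \<pi> i < \<pi> (Suc i) \<and> \<pi> i = Suc (\<pi> c))"
  proof
    assume "contains_bv n \<pi> 3 (perm_of_list [2,3,1]) {1} {1}"
    then obtain \<iota> j :: "nat \<Rightarrow> nat" where A: "strict_mono_on {1..3} \<iota>" "\<iota> ` {1..3} \<subseteq> {1..n}"
      "\<forall>a\<in>{1..3}. \<forall>b\<in>{1..3}. \<pi> (\<iota> a) < \<pi> (\<iota> b) \<longleftrightarrow> perm_of_list [2,3,1] a < perm_of_list [2,3,1] b"
      "strict_mono_on {1..3} j" "j ` {1..3} = (\<lambda>a. \<pi> (\<iota> a)) ` {1..3}"
      "\<forall>x\<in>{1}. ext_seq n 3 \<iota> (x + 1) = ext_seq n 3 \<iota> x + 1"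
      "\<forall>y\<in>{1}. ext_seq n 3 j (y + 1) = ext_seq n 3 j y + 1"
      unfolding contains_bv_def by auto
    have i1: "\<iota> 1 < \<iota> 2" "\<iota> 2 < \<iota> 3" using strict_mono_onD[OF A(1), of 1 2] strict_mono_onD[OF A(1), of 2 3] by simp_all
    have j1: "j 1 < j 2" "j 2 < j 3" using strict_mono_onD[OF A(4), of 1 2] strict_mono_onD[OF A(4), of 2 3] by simp_all
    have i2: "\<iota> 1 \<ge> 1" "\<iota> 3 \<le> n" using A(2) unfolding image_subset_iff
      by (auto dest!: bspec[of _ _ 1] bspec[of _ _ 3])
    have j2: "{j 1, j 2, j 3} = {\<pi> (\<iota> 1), \<pi> (\<iota> 2), \<pi> (\<iota> 3)}" using A(5) by (simp add: set123)
    have x: "\<iota> 2 = \<iota> 1 + 1" and y: "j 2 = j 1 + 1" using A(6,7) by (auto simp: ext_seq_def numeral_2_eq_2 numeral_3_eq_3)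
    have o: "\<pi> (\<iota> 1) < \<pi> (\<iota> 2)" "\<pi> (\<iota> 3) < \<pi> (\<iota> 1)"
      using A(3) by (auto simp: perm_of_list_def set123 dest!: bspec[of _ _ 1] bspec[of _ _ 2] bspec[of _ _ 3])
    have "{j 1, j 2, j 3} = {\<pi> (\<iota> 3), \<pi> (\<iota> 1), \<pi> (\<iota> 2)}" using j2 by auto
    then have "j 1 = \<pi> (\<iota> 3) \<and> j 2 = \<pi> (\<iota> 1)"
      using three_sorted[OF j1 o(2) o(1)] by blast
    then show "\<exists>i c. 1 \<le> i \<and> Suc i < c \<and> c \<le> n \<and> \<pi> i < \<pi> (Suc i) \<and> \<pi> i = Suc (\<pi> c)"
      using i1 i2 x y o by (intro exI[of _ "\<iota> 1"] exI[of _ "\<iota> 3"]) auto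
  next
    assume "\<exists>i c. 1 \<le> i \<and> Suc i < c \<and> c \<le> n \<and> \<pi> i < \<pi> (Suc i) \<and> \<pi> i = Suc (\<pi> c)"
    then obtain i c where h: "1 \<le> i" "Suc i < c" "c \<le> n" "\<pi> i < \<pi> (Suc i)" "\<pi> i = Suc (\<pi> c)" by blast
    define \<iota> where "\<iota> t = (if t = 1 then i else if t = 2 then Suc i else c)" for t :: nat
    define j where "j t = (if t = 1 then \<pi> c else if t = 2 then \<pi> i else \<pi> (Suc i))" for t :: nat
    show "contains_bv n \<pi> 3 (perm_of_list [2,3,1]) {1} {1}"
      unfolding contains_bv_def
      apply (rule exI[of _ \<iota>], rule exI[of _ j])
      using h by (auto simp: strict_mono_on_def set123 \<iota>_def j_def perm_of_list_def ext_seq_def)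
  qed
  then show ?thesis unfolding avoids_bv_def by (simp add: eval_nat_numeral)
qed

lemma avoid21_iff:
  "avoids_bv n \<pi> [2,1] {1} {1} \<longleftrightarrow>
   \<not> (\<exists>i. 1 \<le> i \<and> Suc i \<le> n \<and> \<pi> i = Suc (\<pi> (Suc i)))"
proof -
  have "contains_bv n \<pi> 2 (perm_of_list [2,1]) {1} {1} \<longleftrightarrow>
   (\<exists>i. 1 \<le> i \<and> Suc i \<le> n \<and> \<pi> i = Suc (\<pi> (Suc i)))"
  proof
    assume "contains_bv n \<pi> 2 (perm_of_list [2,1]) {1} {1}"
    then obtain \<iota> j :: "nat \<Rightarrow> nat" where A: "strict_mono_on {1..2} \<iota>" "\<iota> ` {1..2} \<subseteq> {1..n}"
      "\<forall>a\<in>{1..2}. \<forall>b\<in>{1..2}. \<pi> (\<iota> a) < \<pi> (\<iota> b) \<longleftrightarrow> perm_of_list [2,1] a < perm_of_list [2,1] b"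
      "strict_mono_on {1..2} j" "j ` {1..2} = (\<lambda>a. \<pi> (\<iota> a)) ` {1..2}"
      "\<forall>x\<in>{1}. ext_seq n 2 \<iota> (x + 1) = ext_seq n 2 \<iota> x + 1"
      "\<forall>y\<in>{1}. ext_seq n 2 j (y + 1) = ext_seq n 2 j y + 1"
      unfolding contains_bv_def by auto
    have i1: "\<iota> 1 < \<iota> 2" using strict_mono_onD[OF A(1), of 1 2] by simp
    have j1: "j 1 < j 2" using strict_mono_onD[OF A(4), of 1 2] by simp
    have i2: "\<iota> 1 \<ge> 1" "\<iota> 2 \<le> n" using A(2) unfolding image_subset_iff
      by (auto dest!: bspec[of _ _ 1] bspec[of _ _ 2])
    have j2: "{j 1, j 2} = {\<pi> (\<iota> 1), \<pi> (\<iota> 2)}" using A(5) by (simp add: set12)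
    have x: "\<iota> 2 = \<iota> 1 + 1" and y: "j 2 = j 1 + 1" using A(6,7) by (auto simp: ext_seq_def numeral_2_eq_2)
    have "\<pi> (\<iota> 2) < \<pi> (\<iota> 1)" using A(3) by (auto simp: perm_of_list_def set12)
    then have "j 1 = \<pi> (\<iota> 2) \<and> j 2 = \<pi> (\<iota> 1)"
      using j1 j2 by (auto simp: doubleton_eq_iff)
    then show "\<exists>i. 1 \<le> i \<and> Suc i \<le> n \<and> \<pi> i = Suc (\<pi> (Suc i))"
      using i1 i2 x y by (intro exI[of _ "\<iota> 1"]) auto
  next
    assume "\<exists>i. 1 \<le> i \<and> Suc i \<le> n \<and> \<pi> i = Suc (\<pi> (Suc i))"
    then obtain i where h: "1 \<le> i" "Suc i \<le> n" "\<pi> i = Suc (\<pi> (Suc i))" by blast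
    define \<iota> where "\<iota> t = (if t = 1 then i else Suc i)" for t :: nat
    define j where "j t = (if t = 1 then \<pi> (Suc i) else \<pi> i)" for t :: nat
    show "contains_bv n \<pi> 2 (perm_of_list [2,1]) {1} {1}"
      unfolding contains_bv_def
      apply (rule exI[of _ \<iota>], rule exI[of _ j])
      using h by (auto simp: strict_mono_on_def set12 \<iota>_def j_def perm_of_list_def ext_seq_def)
  qed
  then show ?thesis unfolding avoids_bv_def by (simp add: eval_nat_numeral)
qed


definition sh :: "nat \<Rightarrow> nat \<Rightarrow> nat" where
  "sh v x = (if v \<le> x then Suc x else x)"

lemma sh_less_iff[simp]: "sh v x < sh v y \<longleftrightarrow> x < y"
  by (auto simp: sh_def)
lemma sh_eq_iff[simp]: "sh v x = sh v y \<longleftrightarrow> x = y"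
  by (auto simp: sh_def)
lemma sh_neq[simp]: "sh v x \<noteq> v"
  by (auto simp: sh_def)
lemma sh_neq2[simp]: "v \<noteq> sh v x"
  by (auto simp: sh_def)
lemma sh_gt_iff: "v < sh v x \<longleftrightarrow> v \<le> x"
  by (auto simp: sh_def)

definition avP :: "nat \<Rightarrow> (nat \<Rightarrow> nat) \<Rightarrow> bool" where
  "avP n \<pi> \<longleftrightarrow> \<not> (\<exists>i c. 1 \<le> i \<and> Suc i < c \<and> c \<le> n \<and> \<pi> (Suc i) < \<pi> i \<and> \<pi> (Suc i) = Suc (\<pi> c))"

definition DP :: "nat \<Rightarrow> (nat \<Rightarrow> nat) \<Rightarrow> nat set" where
  "DP n \<pi> = {\<pi> (Suc i) | i. 1 \<le> i \<and> Suc i \<le> n \<and> \<pi> (Suc i) < \<pi> i}"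

definition AP :: "nat \<Rightarrow> (nat \<Rightarrow> nat) \<Rightarrow> nat set" where
  "AP n \<pi> = {1..Suc n} - DP n \<pi>"

definition appP :: "nat \<Rightarrow> nat \<Rightarrow> (nat \<Rightarrow> nat) \<Rightarrow> nat \<Rightarrow> nat" where
  "appP n v \<pi> = (\<lambda>t. if t = Suc n then v else if 1 \<le> t \<and> t \<le> n then sh v (\<pi> t) else t)"

definition parP :: "nat \<Rightarrow> (nat \<Rightarrow> nat) \<Rightarrow> nat \<Rightarrow> nat" where
  "parP n c = (\<lambda>t. if 1 \<le> t \<and> t \<le> n then (if c (Suc n) < c t then c t - 1 else c t) else t)"

lemma DP_sub: "\<pi> permutes {1..n} \<Longrightarrow> DP n \<pi> \<subseteq> {1..n}"
  unfolding DP_def using permutes_in_image[of \<pi> "{1..n}"] by fastforce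

lemma finite_AP: "finite (AP n \<pi>)" unfolding AP_def by auto

lemma card_AP: "\<pi> permutes {1..n} \<Longrightarrow> card (AP n \<pi>) = Suc n - card (DP n \<pi>)"
proof -
  assume "\<pi> permutes {1..n}"
  then have "DP n \<pi> \<subseteq> {1..Suc n}" using DP_sub by fastforce
  then show ?thesis unfolding AP_def by (simp add: card_Diff_subset finite_subset)
qed

lemma card_DP: "\<pi> permutes {1..n} \<Longrightarrow> card (DP n \<pi>) \<le> n"
  using DP_sub card_mono[of "{1..n}" "DP n \<pi>"] by fastforce

lemma appP_permutes:
  assumes p: "\<pi> permutes {1..n}" and v: "v \<in> {1..Suc n}"
  shows "appP n v \<pi> permutes {1..Suc n}"
proof (rule inj_imp_permutes)
  have im: "\<And>t. t \<in> {1..n} \<Longrightarrow> \<pi> t \<in> {1..n}" using permutes_in_image[OF p] by blast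
  have inj: "inj \<pi>" using permutes_inj[OF p] .
  show "inj_on (appP n v \<pi>) {1..Suc n}"
  proof (rule inj_onI)
    fix x y assume xy: "x \<in> {1..Suc n}" "y \<in> {1..Suc n}" "appP n v \<pi> x = appP n v \<pi> y"
    then show "x = y" using inj by (auto simp: appP_def inj_eq split: if_splits)
  qed
  show "\<And>x. x \<in> {1..Suc n} \<Longrightarrow> appP n v \<pi> x \<in> {1..Suc n}"
    using im v by (auto simp: appP_def sh_def)
qed (auto simp: appP_def)

lemma appP_avP:
  assumes p: "\<pi> permutes {1..n}" and av: "avP n \<pi>" and v: "v \<in> AP n \<pi>"
  shows "avP (Suc n) (appP n v \<pi>)"
  unfolding avP_def
proof
  assume "\<exists>i c. 1 \<le> i \<and> Suc i < c \<and> c \<le> Suc n \<and> appP n v \<pi> (Suc i) < appP n v \<pi> i \<and>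
        appP n v \<pi> (Suc i) = Suc (appP n v \<pi> c)"
  then obtain i c where h: "1 \<le> i" "Suc i < c" "c \<le> Suc n" "appP n v \<pi> (Suc i) < appP n v \<pi> i"
    "appP n v \<pi> (Suc i) = Suc (appP n v \<pi> c)" by blast
  have a1: "appP n v \<pi> i = sh v (\<pi> i)" "appP n v \<pi> (Suc i) = sh v (\<pi> (Suc i))"
    using h by (auto simp: appP_def)
  have desc: "\<pi> (Suc i) < \<pi> i" using h(4) a1 by simp
  show False
  proof (cases "c = Suc n")
    case True
    then have "sh v (\<pi> (Suc i)) = Suc v" using h(5) a1 by (simp add: appP_def)
    then have "\<pi> (Suc i) = v" by (auto simp: sh_def split: if_splits)
    then have "v \<in> DP n \<pi>" unfolding DP_def using h True desc by auto
    then show False using v by (simp add: AP_def)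
  next
    case False
    then have "appP n v \<pi> c = sh v (\<pi> c)" using h by (auto simp: appP_def)
    then have e: "sh v (\<pi> (Suc i)) = Suc (sh v (\<pi> c))" using h(5) a1 by simp
    have "\<pi> c < \<pi> (Suc i)" using e by (metis lessI sh_less_iff)
    then have "\<pi> (Suc i) = Suc (\<pi> c)" using e by (auto simp: sh_def split: if_splits)
    then show False using av h False desc unfolding avP_def by force
  qed
qed

lemma parP_appP:
  assumes p: "\<pi> permutes {1..n}"
  shows "parP n (appP n v \<pi>) = \<pi>"
proof
  fix t show "parP n (appP n v \<pi>) t = \<pi> t"
    using permutes_not_in[OF p, of t] by (auto simp: parP_def appP_def sh_def)
qed

lemma parP_props:
  assumes c: "c permutes {1..Suc n}" and av: "avP (Suc n) c"
  shows "parP n c permutes {1..n}" "avP n (parP n c)" "c (Suc n) \<in> AP n (parP n c)"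
    "c = appP n (c (Suc n)) (parP n c)"
proof -
  let ?v = "c (Suc n)"
  let ?\<pi> = "parP n c"
  have im: "\<And>t. t \<in> {1..Suc n} \<Longrightarrow> c t \<in> {1..Suc n}" using permutes_in_image[OF c] by blast
  have inj: "inj c" using permutes_inj[OF c] .
  have ne: "\<And>t. t \<in> {1..n} \<Longrightarrow> c t \<noteq> ?v" using inj by (auto simp: inj_eq)
  have v1: "?v \<in> {1..Suc n}" using im by simp
  show pp: "?\<pi> permutes {1..n}"
  proof (rule inj_imp_permutes)
    show "inj_on ?\<pi> {1..n}"
    proof (rule inj_onI)
      fix x y assume xy: "x \<in> {1..n}" "y \<in> {1..n}" "?\<pi> x = ?\<pi> y"
      have "c x \<noteq> ?v" "c y \<noteq> ?v" using ne xy by auto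
      then have "c x = c y" using xy(3) xy(1,2) by (auto simp: parP_def split: if_splits)
      then show "x = y" using inj by (simp add: inj_eq)
    qed
    show "\<And>x. x \<in> {1..n} \<Longrightarrow> ?\<pi> x \<in> {1..n}"
    proof -
      fix x assume x: "x \<in> {1..n}"
      then have "c x \<in> {1..Suc n}" "c x \<noteq> ?v" using im ne by auto
      then show "?\<pi> x \<in> {1..n}" using x v1 by (auto simp: parP_def)
    qed
  qed (auto simp: parP_def)
  show eq: "c = appP n ?v ?\<pi>"
  proof
    fix t show "c t = appP n ?v ?\<pi> t"
    proof (cases "t \<in> {1..n}")
      case True
      then show ?thesis using ne[OF True] by (auto simp: appP_def parP_def sh_def)
    next
      case False
      then show ?thesis using permutes_not_in[OF c, of t] by (auto simp: appP_def parP_def)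
    qed
  qed
  have notD: "?v \<notin> DP n ?\<pi>"
  proof
    assume "?v \<in> DP n ?\<pi>"
    then obtain i where i: "1 \<le> i" "Suc i \<le> n" "?\<pi> (Suc i) < ?\<pi> i" "?v = ?\<pi> (Suc i)"
      unfolding DP_def by blast
    have "c (Suc i) = sh ?v (?\<pi> (Suc i))" "c i = sh ?v (?\<pi> i)"
      using i by (subst eq, simp add: appP_def)+
    then have "c (Suc i) = Suc ?v" "c (Suc i) < c i" using i by (auto simp: sh_def)
    then show False using av i unfolding avP_def by force
  qed
  then show "?v \<in> AP n ?\<pi>" using v1 by (simp add: AP_def)
  show "avP n ?\<pi>"
    unfolding avP_def
  proof
    assume "\<exists>i d. 1 \<le> i \<and> Suc i < d \<and> d \<le> n \<and> ?\<pi> (Suc i) < ?\<pi> i \<and> ?\<pi> (Suc i) = Suc (?\<pi> d)"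
    then obtain i d where h: "1 \<le> i" "Suc i < d" "d \<le> n" "?\<pi> (Suc i) < ?\<pi> i" "?\<pi> (Suc i) = Suc (?\<pi> d)"
      by blast
    have cc: "c (Suc i) = sh ?v (?\<pi> (Suc i))" "c i = sh ?v (?\<pi> i)" "c d = sh ?v (?\<pi> d)"
      using h by (subst eq, simp add: appP_def)+
    have desc: "c (Suc i) < c i" using cc h by simp
    show False
    proof (cases "?v = ?\<pi> (Suc i)")
      case True
      then have "?v \<in> DP n ?\<pi>" unfolding DP_def using h by fastforce
      then show False using notD by simp
    next
      case False
      then have "c (Suc i) = Suc (c d)" using cc h(5) by (auto simp: sh_def)
      then show False using av h desc unfolding avP_def by force
    qed
  qed
qed

lemma DP_appP:
  assumes p: "\<pi> permutes {1..n}" and n: "n \<ge> 1"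
  shows "DP (Suc n) (appP n v \<pi>) = sh v ` DP n \<pi> \<union> (if v \<le> \<pi> n then {v} else {})"
proof -
  have A: "\<And>i. 1 \<le> i \<Longrightarrow> i \<le> n \<Longrightarrow> appP n v \<pi> i = sh v (\<pi> i)" by (auto simp: appP_def)
  have B: "appP n v \<pi> (Suc n) = v" by (simp add: appP_def)
  show ?thesis
  proof (rule set_eqI)
    fix w
    show "w \<in> DP (Suc n) (appP n v \<pi>) \<longleftrightarrow> w \<in> sh v ` DP n \<pi> \<union> (if v \<le> \<pi> n then {v} else {})"
    proof
      assume "w \<in> DP (Suc n) (appP n v \<pi>)"
      then obtain i where i: "1 \<le> i" "Suc i \<le> Suc n" "appP n v \<pi> (Suc i) < appP n v \<pi> i"
        "w = appP n v \<pi> (Suc i)" unfolding DP_def by blast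
      show "w \<in> sh v ` DP n \<pi> \<union> (if v \<le> \<pi> n then {v} else {})"
      proof (cases "Suc i = Suc n")
        case True
        then show ?thesis using i B A[of n] n by (auto simp: sh_gt_iff)
      next
        case False
        then have "\<pi> (Suc i) < \<pi> i" "w = sh v (\<pi> (Suc i))" using i A[of i] A[of "Suc i"] by auto
        then show ?thesis using i False unfolding DP_def
          by (intro UnI1 image_eqI[of _ _ "\<pi> (Suc i)"]) auto
      qed
    next
      assume "w \<in> sh v ` DP n \<pi> \<union> (if v \<le> \<pi> n then {v} else {})"
      then show "w \<in> DP (Suc n) (appP n v \<pi>)"
      proof
        assume "w \<in> sh v ` DP n \<pi>"
        then obtain i where i: "1 \<le> i" "Suc i \<le> n" "\<pi> (Suc i) < \<pi> i" "w = sh v (\<pi> (Suc i))"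
          unfolding DP_def by blast
        then show ?thesis unfolding DP_def using A[of i] A[of "Suc i"]
          by (intro CollectI exI[of _ i]) auto
      next
        assume "w \<in> (if v \<le> \<pi> n then {v} else {})"
        then have "w = v" "v \<le> \<pi> n" by (auto split: if_splits)
        then show ?thesis unfolding DP_def using A[of n] B n
          by (intro CollectI exI[of _ n]) (auto simp: sh_gt_iff)
      qed
    qed
  qed
qed


definition labP :: "nat \<times> (nat \<Rightarrow> nat) \<Rightarrow> nat \<times> nat" where
  "labP x = (case x of (n, \<pi>) \<Rightarrow> (card (AP n \<pi>), rk (AP n \<pi>) (\<pi> n)))"

lemma labP_app:
  assumes p: "\<pi> permutes {1..n}" and n: "n \<ge> 1" and v: "v \<in> AP n \<pi>"
  shows "labP (Suc n, appP n v \<pi>) =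
    (if rk (AP n \<pi>) v \<le> rk (AP n \<pi>) (\<pi> n) then (card (AP n \<pi>), rk (AP n \<pi>) v - 1)
     else (Suc (card (AP n \<pi>)), rk (AP n \<pi>) v))"
proof -
  let ?A = "AP n \<pi>" and ?D = "DP n \<pi>" and ?c = "appP n v \<pi>"
  have cp: "?c permutes {1..Suc n}" using appP_permutes[OF p] v by (auto simp: AP_def)
  have D': "DP (Suc n) ?c = sh v ` ?D \<union> (if v \<le> \<pi> n then {v} else {})" using DP_appP[OF p n] .
  have cv: "?c (Suc n) = v" by (simp add: appP_def)
  have iff: "rk ?A v \<le> rk ?A (\<pi> n) \<longleftrightarrow> v \<le> \<pi> n" using rk_le_iff[OF finite_AP v] .
  have finD: "finite ?D" using DP_sub[OF p] finite_subset by blast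
  have cardsh: "card (sh v ` ?D) = card ?D" by (rule card_image) (simp add: inj_on_def)
  have cD': "card (DP (Suc n) ?c) = card ?D + (if v \<le> \<pi> n then 1 else 0)"
  proof -
    have "v \<notin> sh v ` ?D" by auto
    then show ?thesis using finD cardsh by (simp add: D' card_insert_disjoint)
  qed
  have cA: "card ?A = Suc n - card ?D" using card_AP[OF p] .
  have cA': "card (AP (Suc n) ?c) = Suc (Suc n) - card (DP (Suc n) ?c)" using card_AP[OF cp] .
  have le: "card ?D \<le> n" using card_DP[OF p] .
  have k: "card (AP (Suc n) ?c) = (if v \<le> \<pi> n then card ?A else Suc (card ?A))"
    using cA cA' cD' le by auto
  have vr: "v \<le> Suc n" "1 \<le> v" "v \<notin> ?D" using v by (auto simp: AP_def)
  have set1: "{w \<in> AP (Suc n) ?c. w \<le> v} = {w \<in> ?A. w < v} \<union> (if v \<le> \<pi> n then {} else {v})"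
  proof (rule set_eqI)
    fix w
    have "w < v \<Longrightarrow> w \<in> sh v ` ?D \<longleftrightarrow> w \<in> ?D"
      by (auto simp: sh_def image_iff split: if_splits)
    then show "w \<in> {w \<in> AP (Suc n) ?c. w \<le> v} \<longleftrightarrow> w \<in> {w \<in> ?A. w < v} \<union> (if v \<le> \<pi> n then {} else {v})"
      using vr unfolding AP_def D' by (cases "w < v") auto
  qed
  have set2: "{w \<in> ?A. w \<le> v} = insert v {w \<in> ?A. w < v}" using v by auto
  have rA: "rk ?A v = Suc (card {w \<in> ?A. w < v})"
    unfolding rk_def set2 using finite_AP by (subst card_insert_disjoint) auto
  have rA': "rk (AP (Suc n) ?c) v = (if v \<le> \<pi> n then card {w \<in> ?A. w < v} else Suc (card {w \<in> ?A. w < v}))"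
    unfolding rk_def set1 using finite_AP by (auto simp: card_insert_disjoint)
  show ?thesis unfolding labP_def using k rA rA' iff cv by auto
qed

definition SP :: "nat \<Rightarrow> (nat \<times> (nat \<Rightarrow> nat)) set" where
  "SP n = (\<lambda>\<pi>. (n, \<pi>)) ` {\<pi>. \<pi> permutes {1..n} \<and> avP n \<pi>}"

definition chP :: "nat \<times> (nat \<Rightarrow> nat) \<Rightarrow> (nat \<times> (nat \<Rightarrow> nat)) set" where
  "chP x = (case x of (n, \<pi>) \<Rightarrow> (\<lambda>v. (Suc n, appP n v \<pi>)) ` AP n \<pi>)"

lemma permutes_1: "\<pi> permutes {1..1::nat} \<longleftrightarrow> \<pi> = id"
proof
  assume "\<pi> permutes {1..1::nat}"
  then have "\<pi> 1 \<in> {1..1}" "\<And>x. x \<notin> {1..1} \<Longrightarrow> \<pi> x = x"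
    using permutes_in_image permutes_not_in by fastforce+
  then show "\<pi> = id" by (intro ext) (metis atLeastAtMost_singleton id_apply singletonD)
qed (simp add: permutes_id)

theorem countP: "card {\<pi>. \<pi> permutes {1..Suc j} \<and> avP (Suc j) \<pi>} = G j 2 1"
proof -
  have "card (SP (Suc j)) = G j 2 1"
  proof (rule engine[where S = SP and ch = chP and lab = labP and r = "(1, id)"])
    fix n assume n: "n \<ge> (1::nat)"
    show "SP (Suc n) = (\<Union>x\<in>SP n. chP x)"
    proof (rule set_eqI, rule iffI)
      fix y assume "y \<in> SP (Suc n)"
      then obtain c where y: "y = (Suc n, c)" "c permutes {1..Suc n}" "avP (Suc n) c"
        unfolding SP_def by auto
      note pp = parP_props[OF y(2,3)]
      show "y \<in> (\<Union>x\<in>SP n. chP x)"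
        unfolding SP_def chP_def using pp y
        by (intro UN_I[of "(n, parP n c)"]) (auto intro!: image_eqI[of _ _ "c (Suc n)"])
    next
      fix y assume "y \<in> (\<Union>x\<in>SP n. chP x)"
      then obtain \<pi> v where h: "\<pi> permutes {1..n}" "avP n \<pi>" "v \<in> AP n \<pi>" "y = (Suc n, appP n v \<pi>)"
        unfolding SP_def chP_def by auto
      then have "appP n v \<pi> permutes {1..Suc n}" using appP_permutes[OF h(1)] by (auto simp: AP_def)
      then show "y \<in> SP (Suc n)" unfolding SP_def using appP_avP[OF h(1-3)] h(4) by auto
    qed
  next
    fix n x y assume n: "n \<ge> (1::nat)" and x: "x \<in> SP n" and y: "y \<in> SP n" and xy: "x \<noteq> y"
    obtain \<pi> where px: "x = (n, \<pi>)" "\<pi> permutes {1..n}" using x unfolding SP_def by auto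
    obtain \<sigma> where py: "y = (n, \<sigma>)" "\<sigma> permutes {1..n}" using y unfolding SP_def by auto
    show "chP x \<inter> chP y = {}"
    proof (rule ccontr)
      assume "chP x \<inter> chP y \<noteq> {}"
      then obtain v w where "appP n v \<pi> = appP n w \<sigma>" unfolding chP_def px py by auto
      then have "parP n (appP n v \<pi>) = parP n (appP n w \<sigma>)" by simp
      then have "\<pi> = \<sigma>" using parP_appP px py by metis
      then show False using xy px py by simp
    qed
  next
    fix n x assume "n \<ge> (1::nat)" "x \<in> SP n"
    show "finite (chP x)" unfolding chP_def by (auto simp: finite_AP split: prod.splits)
  next
    fix n x m assume n: "n \<ge> (1::nat)" and x: "x \<in> SP n"
    obtain \<pi> where px: "x = (n, \<pi>)" "\<pi> permutes {1..n}" using x unfolding SP_def by auto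
    let ?A = "AP n \<pi>"
    have "(\<Sum>c\<in>(\<lambda>v. (Suc n, appP n v \<pi>)) ` ?A. G m (fst (labP c)) (snd (labP c))) =
          G (Suc m) (card ?A) (rk ?A (\<pi> n))"
    proof (rule sumG_bij[OF rk_bij[OF finite_AP]])
      show "rk ?A (\<pi> n) \<le> card ?A" by (simp add: rk_le_card finite_AP)
      show "inj_on (\<lambda>v. (Suc n, appP n v \<pi>)) ?A"
      proof (rule inj_onI)
        fix a b assume "(Suc n, appP n a \<pi>) = (Suc n, appP n b \<pi>)"
        then have "appP n a \<pi> (Suc n) = appP n b \<pi> (Suc n)" by simp
        then show "a = b" by (simp add: appP_def)
      qed
    qed (rule labP_app[OF px(2) n])
    then show "(\<Sum>c\<in>chP x. G m (fst (labP c)) (snd (labP c))) = G (Suc m) (fst (labP x)) (snd (labP x))"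
      unfolding chP_def px labP_def by simp
  next
    show "SP 1 = {(1, id)}" unfolding SP_def permutes_1 by (auto simp: avP_def)
  next
    have "DP 1 id = {}" unfolding DP_def by auto
    then have "AP 1 id = {1,2}" unfolding AP_def by auto
    moreover have "{w\<in>{1,2::nat}. w \<le> 1} = {1}" by auto
    ultimately show "labP (1, id) = (2, 1)" unfolding labP_def rk_def by simp
  qed
  moreover have "card (SP (Suc j)) = card {\<pi>. \<pi> permutes {1..Suc j} \<and> avP (Suc j) \<pi>}"
    unfolding SP_def by (rule card_image) (simp add: inj_on_def)
  ultimately show ?thesis by simp
qed


definition avQ :: "nat \<Rightarrow> (nat \<Rightarrow> nat) \<Rightarrow> bool" where
  "avQ N \<sigma> \<longleftrightarrow> \<not> (\<exists>i. 1 \<le> i \<and> Suc i \<le> N \<and> \<sigma> i = Suc (\<sigma> (Suc i)))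
     \<and> \<not> (\<exists>i c. 1 \<le> i \<and> Suc i < c \<and> c \<le> N \<and> \<sigma> i < \<sigma> (Suc i) \<and> \<sigma> i = Suc (\<sigma> c))"

definition insQ :: "nat \<Rightarrow> nat \<Rightarrow> (nat \<Rightarrow> nat) \<Rightarrow> nat \<Rightarrow> nat" where
  "insQ N g \<sigma> t = (if t \<le> g then \<sigma> t else if t = Suc g then Suc N else if t \<le> Suc N then \<sigma> (t - 1) else t)"

definition delQ :: "nat \<Rightarrow> nat \<Rightarrow> (nat \<Rightarrow> nat) \<Rightarrow> nat \<Rightarrow> nat" where
  "delQ N g \<tau> t = (if t \<le> g then \<tau> t else if t \<le> N then \<tau> (Suc t) else t)"

definition LG :: "(nat \<Rightarrow> nat) \<Rightarrow> nat \<Rightarrow> bool" where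
  "LG \<sigma> h \<longleftrightarrow> h = 0 \<or> \<sigma> h = 1 \<or> (\<exists>t. 1 \<le> t \<and> t < h \<and> Suc (\<sigma> t) = \<sigma> h)"

definition Act :: "nat \<Rightarrow> (nat \<Rightarrow> nat) \<Rightarrow> nat set" where
  "Act N \<sigma> = {h \<in> {0..N}. LG \<sigma> h \<and> \<sigma> (Suc h) \<noteq> N}"

lemma perm_range: "(\<sigma>::nat\<Rightarrow>nat) permutes {1..N} \<Longrightarrow> 1 \<le> t \<Longrightarrow> t \<le> N \<Longrightarrow> 1 \<le> \<sigma> t \<and> \<sigma> t \<le> N"
  using permutes_in_image[of \<sigma> "{1..N}" t] by auto

lemma perm_out: "(\<sigma>::nat\<Rightarrow>nat) permutes {1..N} \<Longrightarrow> t = 0 \<or> N < t \<Longrightarrow> \<sigma> t = t"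
proof -
  assume p: "\<sigma> permutes {1..N}" and "t = 0 \<or> N < t"
  then have "t \<notin> {1..N}" by auto
  then show "\<sigma> t = t" by (rule permutes_not_in[OF p])
qed

lemma perm_inj: "(\<sigma>::nat\<Rightarrow>nat) permutes {1..N} \<Longrightarrow> \<sigma> x = \<sigma> y \<longleftrightarrow> x = y"
  using permutes_inj[of \<sigma> "{1..N}"] by (auto simp: inj_eq)

lemma perm_surj: "(\<sigma>::nat\<Rightarrow>nat) permutes {1..N} \<Longrightarrow> 1 \<le> v \<Longrightarrow> v \<le> N \<Longrightarrow> \<exists>t. 1 \<le> t \<and> t \<le> N \<and> \<sigma> t = v"
  using permutes_image[of \<sigma> "{1..N}"] by (metis atLeastAtMost_iff imageE)

lemma insQ_permutes:
  assumes p: "\<sigma> permutes {1..N}" and g: "g \<le> N"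
  shows "insQ N g \<sigma> permutes {1..Suc N}"
proof (rule inj_imp_permutes)
  show "inj_on (insQ N g \<sigma>) {1..Suc N}"
  proof (rule inj_onI)
    fix x y assume xy: "x \<in> {1..Suc N}" "y \<in> {1..Suc N}" "insQ N g \<sigma> x = insQ N g \<sigma> y"
    show "x = y"
    proof (cases "x = Suc g \<or> y = Suc g")
      case True
      have le: "insQ N g \<sigma> t \<le> N" if "t \<in> {1..Suc N}" "t \<noteq> Suc g" for t
      proof (cases "t \<le> g")
        case True then show ?thesis using that perm_range[OF p, of t] g by (simp add: insQ_def)
      next
        case False
        then have "1 \<le> t - 1" "t - 1 \<le> N" using that by auto
        then show ?thesis using False that perm_range[OF p, of "t - 1"] by (simp add: insQ_def)
      qed
      have "insQ N g \<sigma> (Suc g) = Suc N" by (simp add: insQ_def)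
      then show ?thesis using True xy le[of x] le[of y] by force
    next
      case False
      then show ?thesis using xy perm_inj[OF p] by (auto simp: insQ_def split: if_splits)
    qed
  qed
  show "\<And>x. x \<in> {1..Suc N} \<Longrightarrow> insQ N g \<sigma> x \<in> {1..Suc N}"
  proof -
    fix x assume x: "x \<in> {1..Suc N}"
    show "insQ N g \<sigma> x \<in> {1..Suc N}"
    proof (cases "x \<le> g")
      case True then show ?thesis using x g perm_range[OF p, of x] by (simp add: insQ_def)
    next
      case False
      then have "x = Suc g \<or> (1 \<le> x - 1 \<and> x - 1 \<le> N)" using x by auto
      then show ?thesis using False x perm_range[OF p, of "x - 1"] by (auto simp: insQ_def)
    qed
  qed
qed (use perm_out[OF p] g in \<open>auto simp: insQ_def\<close>)

lemma delQ_permutes: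
  assumes p: "\<tau> permutes {1..Suc N}" and g: "g \<le> N" and tg: "\<tau> (Suc g) = Suc N"
  shows "delQ N g \<tau> permutes {1..N}"
proof (rule inj_imp_permutes)
  show "inj_on (delQ N g \<tau>) {1..N}"
  proof (rule inj_onI)
    fix x y assume xy: "x \<in> {1..N}" "y \<in> {1..N}" "delQ N g \<tau> x = delQ N g \<tau> y"
    then show "x = y" using perm_inj[OF p] by (auto simp: delQ_def split: if_splits)
  qed
  show "\<And>x. x \<notin> {1..N} \<Longrightarrow> delQ N g \<tau> x = x"
    using perm_out[OF p] g by (auto simp: delQ_def)
  show "\<And>x. x \<in> {1..N} \<Longrightarrow> delQ N g \<tau> x \<in> {1..N}"
  proof -
    fix x assume x: "x \<in> {1..N}"
    have "delQ N g \<tau> x \<noteq> Suc N" using x tg[symmetric] perm_inj[OF p] by (auto simp: delQ_def)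
    moreover have "1 \<le> delQ N g \<tau> x \<and> delQ N g \<tau> x \<le> Suc N"
      using x perm_range[OF p] by (auto simp: delQ_def)
    ultimately show "delQ N g \<tau> x \<in> {1..N}" by auto
  qed
qed (auto simp: delQ_def)

lemma delQ_insQ:
  assumes p: "\<sigma> permutes {1..N}" and g: "g \<le> N"
  shows "delQ N g (insQ N g \<sigma>) = \<sigma>"
proof
  fix t show "delQ N g (insQ N g \<sigma>) t = \<sigma> t"
    using perm_out[OF p, of t] g by (auto simp: delQ_def insQ_def)
qed

lemma insQ_delQ:
  assumes p: "\<tau> permutes {1..Suc N}" and g: "g \<le> N" and tg: "\<tau> (Suc g) = Suc N"
  shows "insQ N g (delQ N g \<tau>) = \<tau>"
proof
  fix t show "insQ N g (delQ N g \<tau>) t = \<tau> t"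
    using perm_out[OF p, of t] g tg by (auto simp: delQ_def insQ_def)
qed


lemma insQ_avQ:
  assumes p: "\<sigma> permutes {1..N}" and av: "avQ N \<sigma>" and g: "g \<in> Act N \<sigma>"
  shows "avQ (Suc N) (insQ N g \<sigma>)"
proof -
  let ?\<tau> = "insQ N g \<sigma>"
  have gN: "g \<le> N" and lg: "LG \<sigma> g" and gs: "\<sigma> (Suc g) \<noteq> N" using g by (auto simp: Act_def)
  have T1: "\<And>t. t \<le> g \<Longrightarrow> ?\<tau> t = \<sigma> t" by (simp add: insQ_def)
  have T2: "?\<tau> (Suc g) = Suc N" by (simp add: insQ_def)
  have T3: "\<And>t. Suc g < t \<Longrightarrow> t \<le> Suc N \<Longrightarrow> ?\<tau> t = \<sigma> (t - 1)" by (simp add: insQ_def)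
  have R: "\<And>t. 1 \<le> t \<Longrightarrow> t \<le> N \<Longrightarrow> 1 \<le> \<sigma> t \<and> \<sigma> t \<le> N" using perm_range[OF p] by blast
  have tp: "?\<tau> permutes {1..Suc N}" using insQ_permutes[OF p gN] .
  have RT: "\<And>t. 1 \<le> t \<Longrightarrow> t \<le> Suc N \<Longrightarrow> ?\<tau> t \<le> Suc N" using perm_range[OF tp] by blast
  have av1: "\<not> (\<exists>i. 1 \<le> i \<and> Suc i \<le> N \<and> \<sigma> i = Suc (\<sigma> (Suc i)))" using av by (simp add: avQ_def)
  have av2: "\<not> (\<exists>i c. 1 \<le> i \<and> Suc i < c \<and> c \<le> N \<and> \<sigma> i < \<sigma> (Suc i) \<and> \<sigma> i = Suc (\<sigma> c))"
    using av by (simp add: avQ_def)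
  have A1: "\<not> (\<exists>i. 1 \<le> i \<and> Suc i \<le> Suc N \<and> ?\<tau> i = Suc (?\<tau> (Suc i)))"
  proof
    assume "\<exists>i. 1 \<le> i \<and> Suc i \<le> Suc N \<and> ?\<tau> i = Suc (?\<tau> (Suc i))"
    then obtain i where i: "1 \<le> i" "Suc i \<le> Suc N" "?\<tau> i = Suc (?\<tau> (Suc i))" by blast
    consider "Suc i \<le> g" | "i = g" | "i = Suc g" | "Suc g < i" by linarith
    then show False
    proof cases
      case 1 then show ?thesis using i av1 T1[of i] T1[of "Suc i"] gN by auto
    next
      case 2 then show ?thesis using i T1[of g] T2 R[of g] by auto
    next
      case 3
      then have "\<sigma> (Suc g) = N" using i T2 T3[of "Suc i"] by auto
      then show ?thesis using gs by simp
    next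
      case 4
      then have "\<sigma> (i - 1) = Suc (\<sigma> i)" using i T3[of i] T3[of "Suc i"] by auto
      moreover have "1 \<le> i - 1" "Suc (i - 1) \<le> N" "Suc (i - 1) = i" using 4 i by auto
      ultimately show ?thesis using av1 by metis
    qed
  qed
  have A2: "\<not> (\<exists>i c. 1 \<le> i \<and> Suc i < c \<and> c \<le> Suc N \<and> ?\<tau> i < ?\<tau> (Suc i) \<and> ?\<tau> i = Suc (?\<tau> c))"
  proof
    assume "\<exists>i c. 1 \<le> i \<and> Suc i < c \<and> c \<le> Suc N \<and> ?\<tau> i < ?\<tau> (Suc i) \<and> ?\<tau> i = Suc (?\<tau> c)"
    then obtain i c where h: "1 \<le> i" "Suc i < c" "c \<le> Suc N" "?\<tau> i < ?\<tau> (Suc i)" "?\<tau> i = Suc (?\<tau> c)"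
      by blast
    have cg: "c \<noteq> Suc g" using h RT[of i] T2 by auto
    consider "Suc i \<le> g" | "i = g" | "i = Suc g" | "Suc g < i" by linarith
    then show False
    proof cases
      case 1
      show ?thesis
      proof (cases "c \<le> g")
        case True
        then have "\<sigma> i < \<sigma> (Suc i)" "\<sigma> i = Suc (\<sigma> c)" "c \<le> N"
          using h 1 T1[of i] T1[of "Suc i"] T1[of c] gN by auto
        then show ?thesis using av2 h(1,2) by blast
      next
        case False
        then have "?\<tau> c = \<sigma> (c - 1)" using T3[of c] cg h by auto
        moreover have "Suc i < c - 1" "c - 1 \<le> N" using False cg h 1 by auto
        moreover have "\<sigma> i < \<sigma> (Suc i)" "\<sigma> i = Suc (?\<tau> c)"
          using h 1 T1[of i] T1[of "Suc i"] by auto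
        ultimately show ?thesis using h(1) av2 by (metis (no_types, lifting))
      qed
    next
      case 2
      then have tc: "?\<tau> c = \<sigma> (c - 1)" "1 \<le> c - 1" "c - 1 \<le> N" using h T3[of c] by auto
      have e: "\<sigma> g = Suc (\<sigma> (c - 1))" using h 2 T1[of g] tc by simp
      have "g \<noteq> 0" using h 2 by simp
      then have "\<sigma> g = 1 \<or> (\<exists>t. 1 \<le> t \<and> t < g \<and> Suc (\<sigma> t) = \<sigma> g)" using lg by (simp add: LG_def)
      then show ?thesis
      proof
        assume "\<sigma> g = 1" then show False using e R[of "c - 1"] tc by simp
      next
        assume "\<exists>t. 1 \<le> t \<and> t < g \<and> Suc (\<sigma> t) = \<sigma> g"
        then obtain t where "t < g" "\<sigma> t = \<sigma> (c - 1)" using e by auto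
        then show False using perm_inj[OF p] h 2 by auto
      qed
    next
      case 3
      then show ?thesis using h T2 RT[of "Suc i"] by auto
    next
      case 4
      then have "?\<tau> i = \<sigma> (i - 1)" "?\<tau> (Suc i) = \<sigma> i" "?\<tau> c = \<sigma> (c - 1)"
        using h T3[of i] T3[of "Suc i"] T3[of c] by auto
      then have "\<sigma> (i - 1) < \<sigma> (Suc (i - 1)) \<and> \<sigma> (i - 1) = Suc (\<sigma> (c - 1))"
        using h 4 by (simp add: Suc_diff_1[of i])
      moreover have "1 \<le> i - 1" "Suc (i - 1) < c - 1" "c - 1 \<le> N" using 4 h by auto
      ultimately show ?thesis using av2 by blast
    qed
  qed
  show ?thesis using A1 A2 by (simp add: avQ_def)
qed


lemma delQ_props:
  assumes tp: "\<tau> permutes {1..Suc N}" and av: "avQ (Suc N) \<tau>" and tg: "\<tau> (Suc g) = Suc N" and gN: "g \<le> N"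
  shows "avQ N (delQ N g \<tau>)" "g \<in> Act N (delQ N g \<tau>)"
proof -
  let ?\<sigma> = "delQ N g \<tau>"
  have D1: "\<And>t. t \<le> g \<Longrightarrow> ?\<sigma> t = \<tau> t" by (simp add: delQ_def)
  have D2: "\<And>t. g < t \<Longrightarrow> t \<le> N \<Longrightarrow> ?\<sigma> t = \<tau> (Suc t)" by (simp add: delQ_def)
  have RT: "\<And>t. 1 \<le> t \<Longrightarrow> t \<le> Suc N \<Longrightarrow> 1 \<le> \<tau> t \<and> \<tau> t \<le> Suc N" using perm_range[OF tp] by blast
  have ne: "\<And>t. t \<noteq> Suc g \<Longrightarrow> \<tau> t \<noteq> Suc N" using tg perm_inj[OF tp] by metis
  have av1: "\<not> (\<exists>i. 1 \<le> i \<and> Suc i \<le> Suc N \<and> \<tau> i = Suc (\<tau> (Suc i)))" using av by (simp add: avQ_def)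
  have av2: "\<not> (\<exists>i c. 1 \<le> i \<and> Suc i < c \<and> c \<le> Suc N \<and> \<tau> i < \<tau> (Suc i) \<and> \<tau> i = Suc (\<tau> c))"
    using av by (simp add: avQ_def)
  have tgle: "1 \<le> g \<Longrightarrow> \<tau> g < Suc N" using RT[of g] ne[of g] gN by fastforce
  have A1: "\<not> (\<exists>i. 1 \<le> i \<and> Suc i \<le> N \<and> ?\<sigma> i = Suc (?\<sigma> (Suc i)))"
  proof
    assume "\<exists>i. 1 \<le> i \<and> Suc i \<le> N \<and> ?\<sigma> i = Suc (?\<sigma> (Suc i))"
    then obtain i where i: "1 \<le> i" "Suc i \<le> N" "?\<sigma> i = Suc (?\<sigma> (Suc i))" by blast
    consider "Suc i \<le> g" | "i = g" | "g < i" by linarith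
    then show False
    proof cases
      case 1
      then have "\<tau> i = Suc (\<tau> (Suc i))" using i D1[of i] D1[of "Suc i"] by auto
      then show ?thesis using av1 i by auto
    next
      case 2
      then have "\<tau> g = Suc (\<tau> (Suc (Suc g)))" using i D1[of g] D2[of "Suc g"] by auto
      moreover have "\<tau> g < \<tau> (Suc g)" using tgle i 2 tg by auto
      moreover have "1 \<le> g" "Suc g < Suc (Suc g)" "Suc (Suc g) \<le> Suc N" using i 2 by auto
      ultimately show ?thesis using av2 by blast
    next
      case 3
      then have "\<tau> (Suc i) = Suc (\<tau> (Suc (Suc i)))" using i D2[of i] D2[of "Suc i"] by auto
      moreover have "1 \<le> Suc i" "Suc (Suc i) \<le> Suc N" using i by auto
      ultimately show ?thesis using av1 by blast
    qed
  qed
  have A2: "\<not> (\<exists>i c. 1 \<le> i \<and> Suc i < c \<and> c \<le> N \<and> ?\<sigma> i < ?\<sigma> (Suc i) \<and> ?\<sigma> i = Suc (?\<sigma> c))"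
  proof
    assume "\<exists>i c. 1 \<le> i \<and> Suc i < c \<and> c \<le> N \<and> ?\<sigma> i < ?\<sigma> (Suc i) \<and> ?\<sigma> i = Suc (?\<sigma> c)"
    then obtain i c where h: "1 \<le> i" "Suc i < c" "c \<le> N" "?\<sigma> i < ?\<sigma> (Suc i)" "?\<sigma> i = Suc (?\<sigma> c)"
      by blast
    define c' where "c' = (if c \<le> g then c else Suc c)"
    have sc: "?\<sigma> c = \<tau> c'" "c \<le> c'" "c' \<le> Suc N" using D1[of c] D2[of c] h unfolding c'_def by auto
    consider "Suc i \<le> g" | "i = g" | "g < i" by linarith
    then show False
    proof cases
      case 1
      then have "\<tau> i < \<tau> (Suc i)" "\<tau> i = Suc (\<tau> c')" using h D1[of i] D1[of "Suc i"] sc by auto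
      moreover have "Suc i < c'" using sc h by auto
      ultimately show ?thesis using av2 h(1) sc(3) by blast
    next
      case 2
      then have "\<tau> g = Suc (\<tau> (Suc c))" using h D1[of g] D2[of c] by auto
      moreover have "\<tau> g < \<tau> (Suc g)" using tgle h 2 tg by auto
      moreover have "1 \<le> g" "Suc g < Suc c" "Suc c \<le> Suc N" using h 2 by auto
      ultimately show ?thesis using av2 by blast
    next
      case 3
      then have "\<tau> (Suc i) < \<tau> (Suc (Suc i))" "\<tau> (Suc i) = Suc (\<tau> (Suc c))"
        using h D2[of i] D2[of "Suc i"] D2[of c] by auto
      moreover have "1 \<le> Suc i" "Suc (Suc i) < Suc c" "Suc c \<le> Suc N" using h by auto
      ultimately show ?thesis using av2 by blast
    qed
  qed
  show "avQ N ?\<sigma>" using A1 A2 by (simp add: avQ_def)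
  have LGg: "LG ?\<sigma> g"
  proof (cases "g = 0 \<or> \<tau> g = 1")
    case True then show ?thesis using D1[of g] by (auto simp: LG_def)
  next
    case False
    then have g1: "1 \<le> g" "\<tau> g \<noteq> 1" by auto
    then have "2 \<le> \<tau> g" "\<tau> g \<le> N" using RT[of g] tgle gN by auto
    have "\<exists>t. 1 \<le> t \<and> t \<le> Suc N \<and> \<tau> t = \<tau> g - 1"
      by (rule perm_surj[OF tp]) (use \<open>2 \<le> \<tau> g\<close> \<open>\<tau> g \<le> N\<close> in auto)
    then obtain t where t: "1 \<le> t" "t \<le> Suc N" "\<tau> t = \<tau> g - 1" by blast
    have "t \<noteq> g" using t \<open>2 \<le> \<tau> g\<close> by auto
    moreover have "t \<noteq> Suc g" using t tg \<open>\<tau> g \<le> N\<close> by auto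
    moreover have "\<not> Suc g < t"
    proof
      assume "Suc g < t"
      moreover have "\<tau> g < \<tau> (Suc g)" "\<tau> g = Suc (\<tau> t)" using tgle g1 tg t \<open>2 \<le> \<tau> g\<close> by auto
      ultimately show False using av2 g1 t by blast
    qed
    ultimately have "t < g" by auto
    then show ?thesis unfolding LG_def using t D1[of t] D1[of g] \<open>2 \<le> \<tau> g\<close> by (intro disjI2) auto
  qed
  have "?\<sigma> (Suc g) \<noteq> N"
  proof (cases "Suc g \<le> N")
    case True
    then have e: "?\<sigma> (Suc g) = \<tau> (Suc (Suc g))" using D2 by auto
    show ?thesis
    proof
      assume "?\<sigma> (Suc g) = N"
      then have "\<tau> (Suc g) = Suc (\<tau> (Suc (Suc g)))" using e tg by simp
      moreover have "1 \<le> Suc g" "Suc (Suc g) \<le> Suc N" using True by auto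
      ultimately show False using av1 by blast
    qed
  next
    case False
    then show ?thesis by (simp add: delQ_def)
  qed
  then show "g \<in> Act N ?\<sigma>" using LGg gN by (simp add: Act_def)
qed

lemma m_LG:
  assumes p: "\<sigma> permutes {1..N}" and av: "avQ N \<sigma>" and m: "\<sigma> (Suc m) = N" "Suc m \<le> N"
  shows "LG \<sigma> m"
proof (cases "m = 0 \<or> \<sigma> m = 1")
  case True then show ?thesis by (auto simp: LG_def)
next
  case False
  then have m1: "1 \<le> m" "\<sigma> m \<noteq> 1" by auto
  have "\<sigma> m \<noteq> N" using m perm_inj[OF p, of m "Suc m"] by auto
  then have "2 \<le> \<sigma> m" "\<sigma> m < N" using perm_range[OF p, of m] m m1 by auto
  have "\<exists>t. 1 \<le> t \<and> t \<le> N \<and> \<sigma> t = \<sigma> m - 1"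
    by (rule perm_surj[OF p]) (use \<open>2 \<le> \<sigma> m\<close> \<open>\<sigma> m < N\<close> in auto)
  then obtain t where t: "1 \<le> t" "t \<le> N" "\<sigma> t = \<sigma> m - 1" by blast
  have "t \<noteq> m" using t \<open>2 \<le> \<sigma> m\<close> by auto
  moreover have "t \<noteq> Suc m" using t m \<open>\<sigma> m < N\<close> by auto
  moreover have "\<not> Suc m < t"
  proof
    assume "Suc m < t"
    moreover have "\<sigma> m < \<sigma> (Suc m)" "\<sigma> m = Suc (\<sigma> t)" using m t \<open>\<sigma> m < N\<close> \<open>2 \<le> \<sigma> m\<close> by auto
    ultimately show False using av m1 t unfolding avQ_def by blast
  qed
  ultimately have "t < m" by auto
  then show ?thesis unfolding LG_def using t \<open>2 \<le> \<sigma> m\<close> by (intro disjI2) auto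
qed


definition LGs :: "nat \<Rightarrow> (nat \<Rightarrow> nat) \<Rightarrow> nat set" where
  "LGs N \<sigma> = {h \<in> {0..N}. LG \<sigma> h}"

definition mQ :: "nat \<Rightarrow> (nat \<Rightarrow> nat) \<Rightarrow> nat" where
  "mQ N \<sigma> = inv \<sigma> N - 1"

lemma mQ_props:
  assumes p: "\<sigma> permutes {1..N}" and N: "N \<ge> 1"
  shows "\<sigma> (Suc (mQ N \<sigma>)) = N" "Suc (mQ N \<sigma>) \<le> N"
proof -
  have ip: "inv \<sigma> permutes {1..N}" using permutes_inv[OF p] .
  have r: "1 \<le> inv \<sigma> N" "inv \<sigma> N \<le> N" using perm_range[OF ip, of N] N by auto
  then have "Suc (mQ N \<sigma>) = inv \<sigma> N" unfolding mQ_def by simp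
  then show "\<sigma> (Suc (mQ N \<sigma>)) = N" "Suc (mQ N \<sigma>) \<le> N" using permutes_inverses(1)[OF p] r by auto
qed

lemma mQ_unique:
  assumes p: "\<sigma> permutes {1..N}" and "\<sigma> (Suc g) = N"
  shows "mQ N \<sigma> = g"
  unfolding mQ_def using permutes_inverses(2)[OF p, of "Suc g"] assms(2) by simp

lemma Act_eq:
  assumes p: "\<sigma> permutes {1..N}" and m: "\<sigma> (Suc m) = N"
  shows "Act N \<sigma> = LGs N \<sigma> - {m}"
  unfolding Act_def LGs_def using m perm_inj[OF p] by auto

lemma finite_LGs: "finite (LGs N \<sigma>)" unfolding LGs_def by auto
lemma finite_Act: "finite (Act N \<sigma>)" unfolding Act_def by auto

lemma LGs_ins:
  assumes p: "\<sigma> permutes {1..N}" and N: "N \<ge> 1" and gN: "g \<le> N" and m: "\<sigma> (Suc m) = N" "Suc m \<le> N"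
  shows "LGs (Suc N) (insQ N g \<sigma>) = {h \<in> LGs N \<sigma>. h \<le> g} \<union> (if m < g then {Suc g} else {}) \<union> Suc ` {h \<in> LGs N \<sigma>. g < h}"
proof (rule set_eqI)
  let ?\<tau> = "insQ N g \<sigma>"
  have T1: "\<And>t. t \<le> g \<Longrightarrow> ?\<tau> t = \<sigma> t" by (simp add: insQ_def)
  have T2: "?\<tau> (Suc g) = Suc N" by (simp add: insQ_def)
  have T3: "\<And>t. Suc g < t \<Longrightarrow> t \<le> Suc N \<Longrightarrow> ?\<tau> t = \<sigma> (t - 1)" by (simp add: insQ_def)
  have R: "\<And>t. 1 \<le> t \<Longrightarrow> t \<le> N \<Longrightarrow> 1 \<le> \<sigma> t \<and> \<sigma> t \<le> N" using perm_range[OF p] by blast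
  fix h
  consider "h \<le> g" | "h = Suc g" | "Suc g < h" by linarith
  then show "h \<in> LGs (Suc N) ?\<tau> \<longleftrightarrow> h \<in> {h \<in> LGs N \<sigma>. h \<le> g} \<union> (if m < g then {Suc g} else {}) \<union> Suc ` {h \<in> LGs N \<sigma>. g < h}"
  proof cases
    case 1
    have "LG ?\<tau> h \<longleftrightarrow> LG \<sigma> h" unfolding LG_def using 1 T1 by auto
    then show ?thesis using 1 gN by (auto simp: LGs_def)
  next
    case 2
    have "LG ?\<tau> (Suc g) \<longleftrightarrow> (\<exists>t. 1 \<le> t \<and> t < Suc g \<and> Suc (?\<tau> t) = Suc N)"
      unfolding LG_def T2 using N by auto
    also have "\<dots> \<longleftrightarrow> (\<exists>t. 1 \<le> t \<and> t \<le> g \<and> \<sigma> t = N)" using T1 by auto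
    also have "\<dots> \<longleftrightarrow> m < g"
    proof
      assume "\<exists>t. 1 \<le> t \<and> t \<le> g \<and> \<sigma> t = N"
      then obtain t where "1 \<le> t" "t \<le> g" "\<sigma> t = N" by blast
      then have "t = Suc m" using m perm_inj[OF p] by metis
      then show "m < g" using \<open>t \<le> g\<close> by simp
    next
      assume "m < g" then show "\<exists>t. 1 \<le> t \<and> t \<le> g \<and> \<sigma> t = N" using m by (intro exI[of _ "Suc m"]) auto
    qed
    finally show ?thesis using 2 gN by (auto simp: LGs_def)
  next
    case 3
    then obtain h' where h': "h = Suc h'" "g < h'" by (cases h) auto
    show ?thesis
    proof (cases "h' \<le> N")
      case False
      then show ?thesis using h' by (auto simp: LGs_def)
    next
      case True
      have th: "?\<tau> h = \<sigma> h'" using T3[of h] h' True by auto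
      have "LG ?\<tau> h \<longleftrightarrow> LG \<sigma> h'"
      proof
        assume "LG ?\<tau> h"
        then have "\<sigma> h' = 1 \<or> (\<exists>t. 1 \<le> t \<and> t < Suc h' \<and> Suc (?\<tau> t) = \<sigma> h')"
          unfolding LG_def th using h' by auto
        then show "LG \<sigma> h'"
        proof
          assume "\<exists>t. 1 \<le> t \<and> t < Suc h' \<and> Suc (?\<tau> t) = \<sigma> h'"
          then obtain t where t: "1 \<le> t" "t < Suc h'" "Suc (?\<tau> t) = \<sigma> h'" by blast
          consider "t \<le> g" | "t = Suc g" | "Suc g < t" by linarith
          then show "LG \<sigma> h'"
          proof cases
            case 1 then show ?thesis using t T1[of t] h' unfolding LG_def by (intro disjI2) auto
          next
            case 2 then show ?thesis using t T2 R[of h'] True h' by auto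
          next
            case 3
            then have "Suc (\<sigma> (t - 1)) = \<sigma> h'" "1 \<le> t - 1" "t - 1 < h'" using t T3[of t] True by auto
            then show ?thesis unfolding LG_def by blast
          qed
        qed (simp add: LG_def)
      next
        assume "LG \<sigma> h'"
        then have "\<sigma> h' = 1 \<or> (\<exists>t. 1 \<le> t \<and> t < h' \<and> Suc (\<sigma> t) = \<sigma> h')"
          unfolding LG_def using h' by auto
        then show "LG ?\<tau> h"
        proof
          assume "\<exists>t. 1 \<le> t \<and> t < h' \<and> Suc (\<sigma> t) = \<sigma> h'"
          then obtain t where t: "1 \<le> t" "t < h'" "Suc (\<sigma> t) = \<sigma> h'" by blast
          show "LG ?\<tau> h"
          proof (cases "t \<le> g")
            case True
            then show ?thesis using t T1[of t] th h' unfolding LG_def by (intro disjI2) auto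
          next
            case False
            then have "?\<tau> (Suc t) = \<sigma> t" using T3[of "Suc t"] t \<open>h' \<le> N\<close> by auto
            then show ?thesis using t th h' unfolding LG_def
              by (intro disjI2 disjI2 exI[of _ "Suc t"]) auto
          qed
        qed (simp add: LG_def th)
      qed
      then show ?thesis using h' True by (auto simp: LGs_def)
    qed
  qed
qed


definition labQ :: "nat \<times> (nat \<Rightarrow> nat) \<Rightarrow> nat \<times> nat" where
  "labQ x = (case x of (N, \<sigma>) \<Rightarrow> (card (Act N \<sigma>), rk (Act N \<sigma>) (mQ N \<sigma>)))"

lemma labQ_ins:
  assumes p: "\<sigma> permutes {1..N}" and av: "avQ N \<sigma>" and N: "N \<ge> 1" and g: "g \<in> Act N \<sigma>"
  shows "labQ (Suc N, insQ N g \<sigma>) =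
    (if rk (Act N \<sigma>) g \<le> rk (Act N \<sigma>) (mQ N \<sigma>) then (card (Act N \<sigma>), rk (Act N \<sigma>) g - 1)
     else (Suc (card (Act N \<sigma>)), rk (Act N \<sigma>) g))"
proof -
  let ?m = "mQ N \<sigma>" and ?\<tau> = "insQ N g \<sigma>" and ?A = "Act N \<sigma>" and ?L = "LGs N \<sigma>"
  have m: "\<sigma> (Suc ?m) = N" "Suc ?m \<le> N" using mQ_props[OF p N] by auto
  have mL: "?m \<in> ?L" using m_LG[OF p av m] m by (simp add: LGs_def)
  have A: "?A = ?L - {?m}" using Act_eq[OF p m(1)] .
  have gL: "g \<in> ?L" "g \<noteq> ?m" "g \<le> N" using g A by (auto simp: LGs_def)
  have tp: "?\<tau> permutes {1..Suc N}" using insQ_permutes[OF p gL(3)] .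
  have T2: "?\<tau> (Suc g) = Suc N" by (simp add: insQ_def)
  have mt: "mQ (Suc N) ?\<tau> = g" using mQ_unique[OF tp T2] .
  define Lo where "Lo = {h \<in> ?L. h < g}"
  define Hi where "Hi = {h \<in> ?L. g < h}"
  define B where "B = (if ?m < g then {Suc g} else ({} :: nat set))"
  have fLo: "finite Lo" and fHi: "finite Hi" unfolding Lo_def Hi_def using finite_LGs by auto
  have At: "Act (Suc N) ?\<tau> = Lo \<union> B \<union> Suc ` Hi"
    unfolding Act_eq[OF tp T2] LGs_ins[OF p N gL(3) m] Lo_def Hi_def B_def by auto
  have cAt: "card (Act (Suc N) ?\<tau>) = card Lo + card B + card Hi"
  proof -
    have "card (Lo \<union> B \<union> Suc ` Hi) = card (Lo \<union> B) + card (Suc ` Hi)"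
      by (rule card_Un_disjoint) (use fLo fHi in \<open>auto simp: B_def Lo_def Hi_def\<close>)
    also have "card (Lo \<union> B) = card Lo + card B"
      by (rule card_Un_disjoint) (auto simp: fLo B_def Lo_def)
    also have "card (Suc ` Hi) = card Hi" by (simp add: card_image)
    finally show ?thesis using At by simp
  qed
  have Ldec: "?L = insert g (Lo \<union> Hi)" using gL unfolding Lo_def Hi_def by auto
  have cL: "card ?L = Suc (card Lo + card Hi)"
  proof -
    have "card (Lo \<union> Hi) = card Lo + card Hi"
      by (rule card_Un_disjoint) (use fLo fHi in \<open>auto simp: Lo_def Hi_def\<close>)
    moreover have "g \<notin> Lo \<union> Hi" by (auto simp: Lo_def Hi_def)
    ultimately show ?thesis unfolding Ldec using fLo fHi by simp
  qed
  have cA: "card ?A = card Lo + card Hi"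
    unfolding A using mL finite_LGs cL by (simp add: card_Diff_singleton)
  have rt: "rk (Act (Suc N) ?\<tau>) g = card Lo"
  proof -
    have "{a \<in> Act (Suc N) ?\<tau>. a \<le> g} = Lo" unfolding At B_def Lo_def Hi_def by auto
    then show ?thesis by (simp add: rk_def)
  qed
  have rs: "rk ?A g = Suc (card (Lo - {?m}))"
  proof -
    have "{a \<in> ?A. a \<le> g} = insert g (Lo - {?m})" unfolding A Lo_def using gL by auto
    then show ?thesis using fLo by (simp add: rk_def Lo_def)
  qed
  have iff: "rk ?A g \<le> rk ?A ?m \<longleftrightarrow> g \<le> ?m" using rk_le_iff[OF finite_Act g] .
  show ?thesis
  proof (cases "?m < g")
    case True
    then have "?m \<in> Lo" using mL by (simp add: Lo_def)
    then have "card (Lo - {?m}) = card Lo - 1" "card Lo \<ge> 1" using fLo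
      by (auto simp: card_Diff_singleton Suc_le_eq card_gt_0_iff)
    then show ?thesis unfolding labQ_def using True iff cAt cA rt rs mt by (auto simp: B_def)
  next
    case False
    then have "?m \<notin> Lo" by (simp add: Lo_def)
    then have "Lo - {?m} = Lo" by auto
    then show ?thesis unfolding labQ_def using False iff cAt cA rt rs mt gL by (auto simp: B_def)
  qed
qed


definition SQ :: "nat \<Rightarrow> (nat \<times> (nat \<Rightarrow> nat)) set" where
  "SQ n = (\<lambda>\<sigma>. (Suc n, \<sigma>)) ` {\<sigma>. \<sigma> permutes {1..Suc n} \<and> avQ (Suc n) \<sigma>}"

definition chQ :: "nat \<times> (nat \<Rightarrow> nat) \<Rightarrow> (nat \<times> (nat \<Rightarrow> nat)) set" where
  "chQ x = (case x of (N, \<sigma>) \<Rightarrow> (\<lambda>g. (Suc N, insQ N g \<sigma>)) ` Act N \<sigma>)"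

lemma permutes_2:
  assumes p: "\<sigma> permutes {1..2::nat}" and av: "avQ 2 \<sigma>"
  shows "\<sigma> = id"
proof -
  have r: "\<sigma> 1 \<in> {1,2}" "\<sigma> 2 \<in> {1,2}" using perm_range[OF p, of 1] perm_range[OF p, of 2] by auto
  have ne: "\<sigma> 1 \<noteq> \<sigma> 2" using perm_inj[OF p, of 1 2] by simp
  have "\<sigma> 1 \<noteq> 2"
  proof
    assume "\<sigma> 1 = 2"
    then have "\<sigma> 2 = 1" using r ne by auto
    then have "\<sigma> 1 = Suc (\<sigma> (Suc 1))" using \<open>\<sigma> 1 = 2\<close> by (simp add: numeral_2_eq_2)
    then show False using av unfolding avQ_def by fastforce
  qed
  then have "\<sigma> 1 = 1" "\<sigma> 2 = 2" using r ne by auto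
  then show ?thesis
  proof (intro ext)
    fix t
    show "\<sigma> t = id t"
    proof (cases "t = 1 \<or> t = 2")
      case True then show ?thesis using \<open>\<sigma> 1 = 1\<close> \<open>\<sigma> 2 = 2\<close> by auto
    next
      case False
      then have "t = 0 \<or> 2 < t" by auto
      then show ?thesis using perm_out[OF p] by simp
    qed
  qed
qed

theorem countQ: "card {\<sigma>. \<sigma> permutes {1..Suc (Suc j)} \<and> avQ (Suc (Suc j)) \<sigma>} = G j 2 1"
proof -
  have "card (SQ (Suc j)) = G j 2 1"
  proof (rule engine[where S = SQ and ch = chQ and lab = labQ and r = "(2, id)"])
    fix n assume n: "n \<ge> (1::nat)"
    show "SQ (Suc n) = (\<Union>x\<in>SQ n. chQ x)"
    proof (rule set_eqI, rule iffI)
      fix y assume "y \<in> SQ (Suc n)"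
      then obtain \<tau> where y: "y = (Suc (Suc n), \<tau>)" "\<tau> permutes {1..Suc (Suc n)}" "avQ (Suc (Suc n)) \<tau>"
        unfolding SQ_def by auto
      define g where "g = mQ (Suc (Suc n)) \<tau>"
      have tg: "\<tau> (Suc g) = Suc (Suc n)" "g \<le> Suc n" using mQ_props[OF y(2)] unfolding g_def by auto
      note dp = delQ_props[OF y(2,3) tg]
      have sp: "delQ (Suc n) g \<tau> permutes {1..Suc n}" using delQ_permutes[OF y(2) tg(2) tg(1)] .
      have eq: "insQ (Suc n) g (delQ (Suc n) g \<tau>) = \<tau>" using insQ_delQ[OF y(2) tg(2) tg(1)] .
      show "y \<in> (\<Union>x\<in>SQ n. chQ x)"
        unfolding SQ_def chQ_def using dp sp eq y
        by (intro UN_I[of "(Suc n, delQ (Suc n) g \<tau>)"]) (auto intro!: image_eqI[of _ _ g])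
    next
      fix y assume "y \<in> (\<Union>x\<in>SQ n. chQ x)"
      then obtain \<sigma> g where h: "\<sigma> permutes {1..Suc n}" "avQ (Suc n) \<sigma>" "g \<in> Act (Suc n) \<sigma>"
        "y = (Suc (Suc n), insQ (Suc n) g \<sigma>)"
        unfolding SQ_def chQ_def by auto
      have "g \<le> Suc n" using h(3) by (simp add: Act_def)
      then have "insQ (Suc n) g \<sigma> permutes {1..Suc (Suc n)}" using insQ_permutes[OF h(1)] by simp
      then show "y \<in> SQ (Suc n)" unfolding SQ_def using insQ_avQ[OF h(1-3)] h(4) by auto
    qed
  next
    fix n x y assume n: "n \<ge> (1::nat)" and x: "x \<in> SQ n" and y: "y \<in> SQ n" and xy: "x \<noteq> y"
    obtain \<pi> where px: "x = (Suc n, \<pi>)" "\<pi> permutes {1..Suc n}" using x unfolding SQ_def by auto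
    obtain \<sigma> where py: "y = (Suc n, \<sigma>)" "\<sigma> permutes {1..Suc n}" using y unfolding SQ_def by auto
    show "chQ x \<inter> chQ y = {}"
    proof (rule ccontr)
      assume "chQ x \<inter> chQ y \<noteq> {}"
      then obtain g h where gh: "g \<in> Act (Suc n) \<pi>" "h \<in> Act (Suc n) \<sigma>" "insQ (Suc n) g \<pi> = insQ (Suc n) h \<sigma>"
        unfolding chQ_def px py by auto
      have gN: "g \<le> Suc n" "h \<le> Suc n" using gh by (auto simp: Act_def)
      have tp: "insQ (Suc n) g \<pi> permutes {1..Suc (Suc n)}" using insQ_permutes[OF px(2) gN(1)] .
      have e1: "insQ (Suc n) g \<pi> (Suc g) = Suc (Suc n)" by (simp add: insQ_def)
      have e2: "insQ (Suc n) g \<pi> (Suc h) = Suc (Suc n)" unfolding gh(3) by (simp add: insQ_def)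
      have "insQ (Suc n) g \<pi> (Suc g) = insQ (Suc n) g \<pi> (Suc h)" using e1 e2 by simp
      then have "g = h" using perm_inj[OF tp] by simp
      then have "\<pi> = \<sigma>" using delQ_insQ[OF px(2) gN(1)] delQ_insQ[OF py(2) gN(2)] gh(3) by metis
      then show False using xy px py by simp
    qed
  next
    fix n x assume "n \<ge> (1::nat)" "x \<in> SQ n"
    show "finite (chQ x)" unfolding chQ_def by (auto simp: finite_Act split: prod.splits)
  next
    fix n x m assume n: "n \<ge> (1::nat)" and x: "x \<in> SQ n"
    obtain \<sigma> where px: "x = (Suc n, \<sigma>)" "\<sigma> permutes {1..Suc n}" "avQ (Suc n) \<sigma>" using x unfolding SQ_def by auto
    let ?A = "Act (Suc n) \<sigma>"
    have "(\<Sum>c\<in>(\<lambda>g. (Suc (Suc n), insQ (Suc n) g \<sigma>)) ` ?A. G m (fst (labQ c)) (snd (labQ c))) =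
          G (Suc m) (card ?A) (rk ?A (mQ (Suc n) \<sigma>))"
    proof (rule sumG_bij[OF rk_bij[OF finite_Act]])
      show "rk ?A (mQ (Suc n) \<sigma>) \<le> card ?A" by (simp add: rk_le_card finite_Act)
      show "inj_on (\<lambda>g. (Suc (Suc n), insQ (Suc n) g \<sigma>)) ?A"
      proof (rule inj_onI)
        fix a b assume ab: "a \<in> ?A" "b \<in> ?A" "(Suc (Suc n), insQ (Suc n) a \<sigma>) = (Suc (Suc n), insQ (Suc n) b \<sigma>)"
        have aN: "a \<le> Suc n" using ab by (auto simp: Act_def)
        have tp: "insQ (Suc n) a \<sigma> permutes {1..Suc (Suc n)}" using insQ_permutes[OF px(2) aN] .
        have e1: "insQ (Suc n) a \<sigma> (Suc a) = Suc (Suc n)" by (simp add: insQ_def)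
        have e2: "insQ (Suc n) b \<sigma> (Suc b) = Suc (Suc n)" by (simp add: insQ_def)
        have "insQ (Suc n) a \<sigma> (Suc a) = insQ (Suc n) a \<sigma> (Suc b)" using e1 e2 ab(3) by simp
        then show "a = b" using perm_inj[OF tp] by simp
      qed
    qed (rule labQ_ins[OF px(2) px(3)], simp_all)
    then show "(\<Sum>c\<in>chQ x. G m (fst (labQ c)) (snd (labQ c))) = G (Suc m) (fst (labQ x)) (snd (labQ x))"
      unfolding chQ_def px labQ_def by simp
  next
    show "SQ 1 = {(2, id)}"
    proof -
      have "avQ 2 id" by (auto simp: avQ_def)
      then have "{\<sigma>. \<sigma> permutes {1..2::nat} \<and> avQ 2 \<sigma>} = {id}" using permutes_2 permutes_id by blast
      then show ?thesis unfolding SQ_def by (simp add: numeral_2_eq_2)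
    qed
  next
    have "Act 2 id = {0, 2}" unfolding Act_def LG_def by (auto simp: numeral_2_eq_2)
    moreover have "mQ 2 id = 1" unfolding mQ_def by (simp add: inv_id)
    moreover have "{w\<in>{0,2::nat}. w \<le> 1} = {0}" by auto
    ultimately show "labQ (2, id) = (2, 1)" unfolding labQ_def rk_def by simp
  qed
  moreover have "card (SQ (Suc j)) = card {\<sigma>. \<sigma> permutes {1..Suc (Suc j)} \<and> avQ (Suc (Suc j)) \<sigma>}"
    unfolding SQ_def by (rule card_image) (simp add: inj_on_def)
  ultimately show ?thesis by simp
qed


definition valid :: "nat \<Rightarrow> (nat \<times> nat) set \<Rightarrow> bool" where
  "valid m E \<longleftrightarrow> E \<subseteq> {(i, j). 1 \<le> i \<and> i \<le> j \<and> j \<le> m}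
     \<and> (\<forall>i\<in>{1..m}. \<exists>j. (i, j) \<in> E) \<and> (\<forall>j\<in>{1..m}. \<exists>i. (i, j) \<in> E)"

definition topM :: "(nat \<times> nat) set \<Rightarrow> nat \<Rightarrow> nat" where
  "topM E m = (LEAST i. (i, m) \<in> E)"

definition up :: "nat \<Rightarrow> nat \<Rightarrow> nat" where "up y x = (if y < x then Suc x else x)"
definition dn :: "nat \<Rightarrow> nat \<Rightarrow> nat" where "dn t x = (if t < x then x - 1 else x)"

definition fS :: "nat \<Rightarrow> nat \<Rightarrow> nat \<times> nat \<Rightarrow> nat \<times> nat" where
  "fS y m x = (case x of (i, j) \<Rightarrow> if j = m then (if i \<le> y then (i, Suc y) else (Suc i, Suc m)) else (up y i, up y j))"

definition gS :: "nat \<Rightarrow> nat \<Rightarrow> nat \<times> nat \<Rightarrow> nat \<times> nat" where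
  "gS t M x = (case x of (i, j) \<Rightarrow> if j = t then (i, M - 1) else if j = M then (i - 1, M - 1) else (dn t i, dn t j))"

definition kid :: "nat \<Rightarrow> (nat \<times> nat) set \<Rightarrow> nat \<Rightarrow> nat \<times> (nat \<times> nat) set" where
  "kid m E q = (if q < topM E m then (m, insert (q, m) E)
     else if q < m then (Suc m, insert (Suc q, Suc m) (fS q m ` E))
     else (Suc m, insert (Suc m, Suc m) E))"

definition parM :: "nat \<times> (nat \<times> nat) set \<Rightarrow> nat \<times> (nat \<times> nat) set" where
  "parM x = (case x of (M, E) \<Rightarrow>
     (if topM E M = M then (M - 1, E - {(M, M)})
      else if (\<forall>j. (topM E M, j) \<in> E \<longrightarrow> j = M) then (M - 1, gS (topM E M) M ` (E - {(topM E M, M)}))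
      else (M, E - {(topM E M, M)})))"

definition labM :: "nat \<times> (nat \<times> nat) set \<Rightarrow> nat \<times> nat" where
  "labM x = (case x of (m, E) \<Rightarrow> (m, topM E m - 1))"

lemma valid_fin: "valid m E \<Longrightarrow> finite E"
  unfolding valid_def by (rule finite_subset[of _ "{1..m} \<times> {1..m}"]) auto

lemma valid_sub: "valid m E \<Longrightarrow> (i, j) \<in> E \<Longrightarrow> 1 \<le> i \<and> i \<le> j \<and> j \<le> m"
  unfolding valid_def by auto

lemma top_props:
  assumes v: "valid m E" and m: "m \<ge> 1"
  shows "(topM E m, m) \<in> E" "1 \<le> topM E m" "topM E m \<le> m" "\<And>i. (i, m) \<in> E \<Longrightarrow> topM E m \<le> i"
proof -
  have "m \<in> {1..m}" using m by simp
  then obtain i where "(i, m) \<in> E" using v unfolding valid_def by blast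
  then show t: "(topM E m, m) \<in> E" unfolding topM_def by (rule LeastI)
  show "1 \<le> topM E m" "topM E m \<le> m" using valid_sub[OF v t] by auto
  show "\<And>i. (i, m) \<in> E \<Longrightarrow> topM E m \<le> i" unfolding topM_def by (rule Least_le)
qed

lemma top_eqI:
  assumes "(t, m) \<in> E" "\<And>i. (i, m) \<in> E \<Longrightarrow> t \<le> i"
  shows "topM E m = t"
  unfolding topM_def using assms by (intro Least_equality) auto

lemma diag_last: "valid m E \<Longrightarrow> m \<ge> 1 \<Longrightarrow> (m, m) \<in> E"
proof -
  assume v: "valid m E" and m: "m \<ge> 1"
  have "m \<in> {1..m}" using m by simp
  then obtain j where j: "(m, j) \<in> E" using v unfolding valid_def by blast
  then have "j = m" using valid_sub[OF v j] by simp
  then show ?thesis using j by simp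
qed

lemma kid_stay:
  assumes v: "valid m E" and m: "m \<ge> 1" and r: "1 \<le> r" "r < topM E m"
  shows "valid m (insert (r, m) E)" "card (insert (r, m) E) = Suc (card E)"
    "topM (insert (r, m) E) m = r"
proof -
  have tp: "topM E m \<le> m" "\<And>i. (i, m) \<in> E \<Longrightarrow> topM E m \<le> i" using top_props[OF v m] by auto
  have nin: "(r, m) \<notin> E" using tp(2) r by force
  show "valid m (insert (r, m) E)" using v r tp unfolding valid_def by auto
  show "card (insert (r, m) E) = Suc (card E)" using nin valid_fin[OF v] by simp
  show "topM (insert (r, m) E) m = r" using tp(2) r by (intro top_eqI) force+
qed

lemma kid_iso:
  assumes v: "valid m E" and m: "m \<ge> 1"
  shows "valid (Suc m) (insert (Suc m, Suc m) E)" "card (insert (Suc m, Suc m) E) = Suc (card E)"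
    "topM (insert (Suc m, Suc m) E) (Suc m) = Suc m"
proof -
  have nin: "(Suc m, Suc m) \<notin> E" using valid_sub[OF v] by fastforce
  show "valid (Suc m) (insert (Suc m, Suc m) E)" using v unfolding valid_def by (auto simp: le_Suc_eq)
  show "card (insert (Suc m, Suc m) E) = Suc (card E)" using nin valid_fin[OF v] by simp
  show "topM (insert (Suc m, Suc m) E) (Suc m) = Suc m" using valid_sub[OF v] by (intro top_eqI) force+
qed


lemma kid_split:
  assumes v: "valid m E" and m: "m \<ge> 1" and y: "topM E m \<le> y" "y < m"
  shows "valid (Suc m) (insert (Suc y, Suc m) (fS y m ` E))"
    "card (insert (Suc y, Suc m) (fS y m ` E)) = Suc (card E)"
    "topM (insert (Suc y, Suc m) (fS y m ` E)) (Suc m) = Suc y"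
    "inj_on (fS y m) E" "(Suc y, Suc m) \<notin> fS y m ` E"
proof -
  have sub: "\<And>i j. (i, j) \<in> E \<Longrightarrow> 1 \<le> i \<and> i \<le> j \<and> j \<le> m" using valid_sub[OF v] by blast
  have tp: "(topM E m, m) \<in> E" using top_props[OF v m] by auto
  show inj: "inj_on (fS y m) E"
  proof (rule inj_onI)
    fix a b assume ab: "a \<in> E" "b \<in> E" "fS y m a = fS y m b"
    obtain i j where a: "a = (i, j)" by (cases a)
    obtain i' j' where b: "b = (i', j')" by (cases b)
    show "a = b" using ab sub[of i j] sub[of i' j'] unfolding a b
      by (auto simp: fS_def up_def split: if_splits)
  qed
  show nin: "(Suc y, Suc m) \<notin> fS y m ` E"
  proof
    assume "(Suc y, Suc m) \<in> fS y m ` E"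
    then obtain i j where "(i, j) \<in> E" "fS y m (i, j) = (Suc y, Suc m)" by auto
    then show False using sub[of i j] y by (auto simp: fS_def up_def split: if_splits)
  qed
  show "card (insert (Suc y, Suc m) (fS y m ` E)) = Suc (card E)"
    using nin inj valid_fin[OF v] by (simp add: card_image)
  let ?E = "insert (Suc y, Suc m) (fS y m ` E)"
  have s1: "?E \<subseteq> {(i, j). 1 \<le> i \<and> i \<le> j \<and> j \<le> Suc m}"
  proof
    fix x assume "x \<in> ?E"
    then show "x \<in> {(i, j). 1 \<le> i \<and> i \<le> j \<and> j \<le> Suc m}"
    proof
      assume "x = (Suc y, Suc m)" then show ?thesis using y by auto
    next
      assume "x \<in> fS y m ` E"
      then obtain i j where "(i, j) \<in> E" "x = fS y m (i, j)" by auto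
      then show ?thesis using sub[of i j] y by (auto simp: fS_def up_def)
    qed
  qed
  have s2: "\<forall>i\<in>{1..Suc m}. \<exists>j. (i, j) \<in> ?E"
  proof
    fix i assume i: "i \<in> {1..Suc m}"
    consider "i = Suc y" | "i \<le> y" | "Suc y < i" by linarith
    then show "\<exists>j. (i, j) \<in> ?E"
    proof cases
      case 1 then show ?thesis by auto
    next
      case 2
      then have "i \<in> {1..m}" using i y by auto
      then obtain j where j: "(i, j) \<in> E" using v unfolding valid_def by blast
      have "fst (fS y m (i, j)) = i" using 2 by (auto simp: fS_def up_def)
      then show ?thesis using j by (metis imageI insertI2 prod.collapse)
    next
      case 3
      then have "i - 1 \<in> {1..m}" using i y by auto
      then obtain j where j: "(i - 1, j) \<in> E" using v unfolding valid_def by blast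
      have "fst (fS y m (i - 1, j)) = i" using 3 by (auto simp: fS_def up_def)
      then show ?thesis using j by (metis imageI insertI2 prod.collapse)
    qed
  qed
  have s3: "\<forall>j\<in>{1..Suc m}. \<exists>i. (i, j) \<in> ?E"
  proof
    fix j assume j: "j \<in> {1..Suc m}"
    consider "j = Suc m" | "j = Suc y" | "j \<le> y" | "Suc y < j" "j \<le> m" using j by (auto simp: not_less_eq_eq) linarith
    then show "\<exists>i. (i, j) \<in> ?E"
    proof cases
      case 1 then show ?thesis by auto
    next
      case 2
      have "snd (fS y m (topM E m, m)) = j" using 2 y by (auto simp: fS_def)
      then show ?thesis using tp by (metis imageI insertI2 prod.collapse)
    next
      case 3
      then have "j \<in> {1..m}" using j y by auto
      then obtain i where i: "(i, j) \<in> E" using v unfolding valid_def by blast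
      have "snd (fS y m (i, j)) = j" using 3 y by (auto simp: fS_def up_def)
      then show ?thesis using i by (metis imageI insertI2 prod.collapse)
    next
      case 4
      then have "j - 1 \<in> {1..m}" using j y by auto
      then obtain i where i: "(i, j - 1) \<in> E" using v unfolding valid_def by blast
      have "snd (fS y m (i, j - 1)) = j" using 4 y by (auto simp: fS_def up_def)
      then show ?thesis using i by (metis imageI insertI2 prod.collapse)
    qed
  qed
  show "valid (Suc m) ?E" using s1 s2 s3 by (simp add: valid_def)
  show "topM ?E (Suc m) = Suc y"
  proof (rule top_eqI)
    show "(Suc y, Suc m) \<in> ?E" by simp
    fix i assume "(i, Suc m) \<in> ?E"
    then show "Suc y \<le> i"
    proof
      assume "(i, Suc m) \<in> fS y m ` E"
      then obtain a b where "(a, b) \<in> E" "fS y m (a, b) = (i, Suc m)" by auto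
      then show ?thesis using sub[of a b] y by (auto simp: fS_def up_def split: if_splits)
    qed simp
  qed
qed


lemma par_kid:
  assumes v: "valid m E" and m: "m \<ge> 1" and q: "q \<in> {1..m}"
  shows "parM (kid m E q) = (m, E)"
proof -
  let ?t = "topM E m"
  have tp: "(?t, m) \<in> E" "1 \<le> ?t" "?t \<le> m" "\<And>i. (i, m) \<in> E \<Longrightarrow> ?t \<le> i" using top_props[OF v m] by auto
  have sub: "\<And>i j. (i, j) \<in> E \<Longrightarrow> 1 \<le> i \<and> i \<le> j \<and> j \<le> m" using valid_sub[OF v] by blast
  consider "q < ?t" | "?t \<le> q" "q < m" | "q = m" using q by fastforce
  then show ?thesis
  proof cases
    case 1
    note ks = kid_stay[OF v m _ 1]
    have k: "kid m E q = (m, insert (q, m) E)" using 1 by (simp add: kid_def)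
    have nin: "(q, m) \<notin> E" using tp(4) 1 by force
    have qm: "q \<noteq> m" using 1 tp by simp
    have "q \<in> {1..m}" using q by simp
    then obtain j where j: "(q, j) \<in> E" using v unfolding valid_def by blast
    then have "j \<noteq> m" using nin by auto
    then have "\<not> (\<forall>j. (q, j) \<in> insert (q, m) E \<longrightarrow> j = m)" using j by auto
    then show ?thesis unfolding k parM_def using ks q qm nin by auto
  next
    case 2
    note ks = kid_split[OF v m 2]
    let ?E = "insert (Suc q, Suc m) (fS q m ` E)"
    have k: "kid m E q = (Suc m, ?E)" using 2 by (simp add: kid_def)
    have row: "\<forall>j. (Suc q, j) \<in> ?E \<longrightarrow> j = Suc m"
    proof (intro allI impI)
      fix j assume "(Suc q, j) \<in> ?E"
      then show "j = Suc m"
      proof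
        assume "(Suc q, j) \<in> fS q m ` E"
        then obtain a b where "(a, b) \<in> E" "fS q m (a, b) = (Suc q, j)" by auto
        then show ?thesis using sub[of a b] by (auto simp: fS_def up_def split: if_splits)
      qed simp
    qed
    have gf: "\<And>x. x \<in> E \<Longrightarrow> gS (Suc q) (Suc m) (fS q m x) = x"
    proof -
      fix x assume x: "x \<in> E"
      obtain i j where xe: "x = (i, j)" by (cases x)
      show "gS (Suc q) (Suc m) (fS q m x) = x"
        using sub[of i j] x 2 unfolding xe by (auto simp: fS_def gS_def up_def dn_def)
    qed
    have "gS (Suc q) (Suc m) ` (?E - {(Suc q, Suc m)}) = E"
    proof -
      have "?E - {(Suc q, Suc m)} = fS q m ` E" using ks(5) by auto
      then show ?thesis using gf by (simp add: image_image)
    qed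
    then show ?thesis unfolding k parM_def using ks(3) row 2 by auto
  next
    case 3
    note ks = kid_iso[OF v m]
    have k: "kid m E q = (Suc m, insert (Suc m, Suc m) E)" using 3 tp by (simp add: kid_def)
    have nin: "(Suc m, Suc m) \<notin> E" using sub by fastforce
    show ?thesis unfolding k parM_def using ks(3) nin by auto
  qed
qed


lemma card_le_sq: "valid M E \<Longrightarrow> M \<le> 1 \<Longrightarrow> card E \<le> 1"
proof -
  assume v: "valid M E" and M: "M \<le> 1"
  have "E \<subseteq> {(1, 1)}" using valid_sub[OF v] M by fastforce
  then have "card E \<le> card {(1::nat, 1::nat)}" by (intro card_mono) auto
  then show ?thesis by simp
qed

lemma fg_aux:
  assumes "1 \<le> i" "i \<le> j" "j \<le> Suc m" "i \<noteq> Suc y" "j = Suc m \<Longrightarrow> Suc y < i" "y < m"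
  shows "fS y m (gS (Suc y) (Suc m) (i, j)) = (i, j)"
proof -
  consider "j = Suc y" | "j = Suc m" | "j \<noteq> Suc y" "j \<noteq> Suc m" by blast
  then show ?thesis
  proof cases
    case 1
    then have "i \<le> y" using assms by auto
    then show ?thesis using 1 assms(6) by (simp add: fS_def gS_def)
  next
    case 2
    then have "Suc y < i" using assms by auto
    then show ?thesis using 2 assms(6) by (auto simp: fS_def gS_def)
  next
    case 3
    have jm: "j \<le> m" using 3 assms by auto
    have d: "dn (Suc y) j \<noteq> m" using 3 jm assms(6) by (auto simp: dn_def)
    have u: "\<And>x. x \<noteq> Suc y \<Longrightarrow> up y (dn (Suc y) x) = x" by (auto simp: up_def dn_def)
    have "i \<noteq> Suc y" using assms by simp
    then show ?thesis using 3 d u[of i] u[of j] by (simp add: fS_def gS_def)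
  qed
qed

lemma s_aux:
  assumes "1 \<le> i" "i \<le> j" "j \<le> Suc m" "i \<noteq> Suc y" "j = Suc m \<Longrightarrow> Suc y < i" "y < m"
  shows "1 \<le> fst (gS (Suc y) (Suc m) (i, j)) \<and> fst (gS (Suc y) (Suc m) (i, j)) \<le> snd (gS (Suc y) (Suc m) (i, j))
     \<and> snd (gS (Suc y) (Suc m) (i, j)) \<le> m"
proof -
  consider "j = Suc y" | "j = Suc m" | "j \<noteq> Suc y" "j \<noteq> Suc m" by blast
  then show ?thesis
  proof cases
    case 1
    then show ?thesis using assms by (simp add: gS_def)
  next
    case 2
    then show ?thesis using assms by (auto simp: gS_def)
  next
    case 3
    have jm: "j \<le> m" using 3 assms by auto
    then show ?thesis using 3 assms by (auto simp: gS_def dn_def)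
  qed
qed

lemma kid_par:
  assumes v: "valid M E" and c: "card E \<ge> 3"
  shows "valid (fst (parM (M, E))) (snd (parM (M, E)))" "fst (parM (M, E)) \<ge> 1"
    "Suc (card (snd (parM (M, E)))) = card E"
    "\<exists>q\<in>{1..fst (parM (M, E))}. kid (fst (parM (M, E))) (snd (parM (M, E))) q = (M, E)"
proof -
  have M2: "M \<ge> 2" using card_le_sq[OF v] c by (cases "M \<le> 1") auto
  have M1: "M \<ge> 1" using M2 by simp
  let ?t = "topM E M"
  have tp: "(?t, M) \<in> E" "1 \<le> ?t" "?t \<le> M" "\<And>i. (i, M) \<in> E \<Longrightarrow> ?t \<le> i" using top_props[OF v M1] by auto
  have sub: "\<And>i j. (i, j) \<in> E \<Longrightarrow> 1 \<le> i \<and> i \<le> j \<and> j \<le> M" using valid_sub[OF v] by blast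
  have rows: "\<And>i. 1 \<le> i \<Longrightarrow> i \<le> M \<Longrightarrow> \<exists>j. (i, j) \<in> E" using v unfolding valid_def by auto
  have cols: "\<And>j. 1 \<le> j \<Longrightarrow> j \<le> M \<Longrightarrow> \<exists>i. (i, j) \<in> E" using v unfolding valid_def by auto
  have fin: "finite E" using valid_fin[OF v] .
  have diag: "(M, M) \<in> E" using diag_last[OF v M1] .
  have "valid (fst (parM (M, E))) (snd (parM (M, E))) \<and> fst (parM (M, E)) \<ge> 1 \<and>
    Suc (card (snd (parM (M, E)))) = card E \<and>
    (\<exists>q\<in>{1..fst (parM (M, E))}. kid (fst (parM (M, E))) (snd (parM (M, E))) q = (M, E))"
  proof (cases "?t = M")
    case True
    let ?m = "M - 1" and ?E = "E - {(M, M)}"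
    have p: "parM (M, E) = (?m, ?E)" using True by (simp add: parM_def)
    have s: "\<And>i j. (i, j) \<in> ?E \<Longrightarrow> 1 \<le> i \<and> i \<le> j \<and> j \<le> ?m"
    proof -
      fix i j assume ij: "(i, j) \<in> ?E"
      then have "j \<noteq> M" using tp(4)[of i] True sub[of i j] by fastforce
      then show "1 \<le> i \<and> i \<le> j \<and> j \<le> ?m" using sub[of i j] ij by auto
    qed
    have vE: "valid ?m ?E"
      unfolding valid_def
    proof (intro conjI ballI)
      show "?E \<subseteq> {(i, j). 1 \<le> i \<and> i \<le> j \<and> j \<le> ?m}" using s by auto
    next
      fix i assume i: "i \<in> {1..?m}"
      then have "1 \<le> i \<and> i \<le> M" by auto
      then obtain j where j: "(i, j) \<in> E" using rows[of i] by blast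
      then show "\<exists>j. (i, j) \<in> ?E" using i by (intro exI[of _ j]) auto
    next
      fix j assume j: "j \<in> {1..?m}"
      then have "1 \<le> j \<and> j \<le> M" by auto
      then obtain i where i: "(i, j) \<in> E" using cols[of j] by blast
      then show "\<exists>i. (i, j) \<in> ?E" using j by (intro exI[of _ i]) auto
    qed
    have m1: "?m \<ge> 1" using M2 by simp
    have tq: "topM ?E ?m \<le> ?m" using top_props[OF vE m1] by simp
    have k: "kid ?m ?E ?m = (M, E)" using tq M2 diag by (auto simp: kid_def insert_absorb)
    have "Suc (card ?E) = card E" by (rule card_Suc_Diff1[OF fin diag])
    then show ?thesis unfolding p using vE m1 k by force
  next
    case False
    note tM = False
    show ?thesis
    proof (cases "\<forall>j. (?t, j) \<in> E \<longrightarrow> j = M")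
      case True
      let ?m = "M - 1" and ?E = "gS ?t M ` (E - {(?t, M)})"
      have p: "parM (M, E) = (?m, ?E)" unfolding parM_def prod.case
        by (simp only: if_not_P[OF tM] if_P[OF True])
      have t2: "?t \<ge> 2"
      proof (rule ccontr)
        assume "\<not> ?t \<ge> 2"
        then have t1: "?t = 1" using tp by simp
        obtain i where "(i, 1) \<in> E" using cols[of 1] M1 by blast
        then have "(1, 1) \<in> E" using sub by fastforce
        then show False using True t1 tM by auto
      qed
      let ?y = "?t - 1"
      have ntt: "\<And>j. (?t, j) \<in> E \<Longrightarrow> j = M" using True by blast
      define y where "y = ?t - 1"
      define m where "m = M - 1"
      have ym: "?t = Suc y" "M = Suc m" using t2 M2 unfolding y_def m_def by auto
      have yle: "y < m" using ym tp(3) tM by simp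
      have fg: "\<And>x. x \<in> E - {(?t, M)} \<Longrightarrow> fS ?y ?m (gS ?t M x) = x"
      proof -
        fix x assume x: "x \<in> E - {(?t, M)}"
        obtain i j where xe: "x = (i, j)" by (cases x)
        have ij: "(i, j) \<in> E" "(i, j) \<noteq> (?t, M)" using x xe by auto
        have it: "i \<noteq> ?t" using ij ntt by auto
        have jM: "j = M \<Longrightarrow> ?t < i" using tp(4)[of i] ij it by fastforce
        have it': "i \<noteq> Suc y" using it ym(1) by simp
        have jM': "j = Suc m \<Longrightarrow> Suc y < i" using jM ym by simp
        have "fS y m (gS (Suc y) (Suc m) (i, j)) = (i, j)"
          by (rule fg_aux) (use sub[of i j] ij(1) it' jM' yle ym(2) in auto)
        moreover have "?y = y" "?m = m" "?t = Suc y" "M = Suc m" using ym by auto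
        ultimately show "fS ?y ?m (gS ?t M x) = x" unfolding xe by simp
      qed
      have inj: "inj_on (gS ?t M) (E - {(?t, M)})" using fg by (rule inj_on_inverseI)
      have cardE: "Suc (card ?E) = card E"
        using card_image[OF inj] card_Suc_Diff1[OF fin tp(1)] by simp
      have s: "\<And>a b. (a, b) \<in> ?E \<Longrightarrow> 1 \<le> a \<and> a \<le> b \<and> b \<le> ?m"
      proof -
        fix a b assume "(a, b) \<in> ?E"
        then obtain x where x: "x \<in> E - {(?t, M)}" "gS ?t M x = (a, b)" by (rule imageE) simp
        obtain i j where xe: "x = (i, j)" by (cases x)
        have ij: "(i, j) \<in> E" "(i, j) \<noteq> (?t, M)" using x xe by auto
        have it: "i \<noteq> ?t" using ij ntt by auto
        have jM: "j = M \<Longrightarrow> ?t < i" using tp(4)[of i] ij it by fastforce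
        have it': "i \<noteq> Suc y" using it ym(1) by simp
        have jM': "j = Suc m \<Longrightarrow> Suc y < i" using jM ym by simp
        have "1 \<le> fst (gS (Suc y) (Suc m) (i, j)) \<and> fst (gS (Suc y) (Suc m) (i, j)) \<le> snd (gS (Suc y) (Suc m) (i, j))
          \<and> snd (gS (Suc y) (Suc m) (i, j)) \<le> m"
          by (rule s_aux) (use sub[of i j] ij(1) it' jM' yle ym(2) in auto)
        moreover have "?m = m" "?t = Suc y" "M = Suc m" using ym by auto
        ultimately show "1 \<le> a \<and> a \<le> b \<and> b \<le> ?m" using x(2) unfolding xe by simp
      qed
      have vE: "valid ?m ?E"
        unfolding valid_def
      proof (intro conjI ballI)
        show "?E \<subseteq> {(i, j). 1 \<le> i \<and> i \<le> j \<and> j \<le> ?m}" using s by auto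
      next
        fix i assume i: "i \<in> {1..?m}"
        show "\<exists>j. (i, j) \<in> ?E"
        proof (cases "i < ?t")
          case True
          have "1 \<le> i \<and> i \<le> M" using i by auto
          then obtain j where j: "(i, j) \<in> E" using rows[of i] by blast
          have "j \<noteq> M" using tp(4)[of i] True j by fastforce
          then have "fst (gS ?t M (i, j)) = i" using True by (auto simp: gS_def dn_def)
          moreover have "(i, j) \<in> E - {(?t, M)}" using j True by auto
          ultimately show ?thesis by (metis imageI prod.collapse)
        next
          case False
          have "1 \<le> Suc i \<and> Suc i \<le> M" using i by auto
          then obtain j where j: "(Suc i, j) \<in> E" using rows[of "Suc i"] by blast
          have "j \<noteq> ?t" using sub[of "Suc i" j] j False by auto
          then have "fst (gS ?t M (Suc i, j)) = i" using False by (auto simp: gS_def dn_def)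
          moreover have "(Suc i, j) \<in> E - {(?t, M)}" using j False by auto
          ultimately show ?thesis by (metis imageI prod.collapse)
        qed
      next
        fix j assume j: "j \<in> {1..?m}"
        show "\<exists>i. (i, j) \<in> ?E"
        proof (cases "j = ?m")
          case True
          obtain i where i: "(i, ?t) \<in> E" using cols[of ?t] tp by blast
          have "i \<noteq> ?t" using i ntt tM by auto
          then have "(i, ?t) \<in> E - {(?t, M)}" "snd (gS ?t M (i, ?t)) = j" using i True by (auto simp: gS_def)
          then show ?thesis by (metis imageI prod.collapse)
        next
          case False
          show ?thesis
          proof (cases "j < ?t")
            case True
            have "1 \<le> j \<and> j \<le> M" using j by auto
            then obtain i where i: "(i, j) \<in> E" using cols[of j] by blast
            have "snd (gS ?t M (i, j)) = j" "(i, j) \<in> E - {(?t, M)}"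
              using i True False j tp(3) by (auto simp: gS_def dn_def)
            then show ?thesis by (metis imageI prod.collapse)
          next
            case False2: False
            have "1 \<le> Suc j \<and> Suc j \<le> M" using j False by auto
            then obtain i where i: "(i, Suc j) \<in> E" using cols[of "Suc j"] by blast
            have "snd (gS ?t M (i, Suc j)) = j" "(i, Suc j) \<in> E - {(?t, M)}"
              using i False2 False j tp(3) by (auto simp: gS_def dn_def)
            then show ?thesis by (metis imageI prod.collapse)
          qed
        qed
      qed
      have m1: "?m \<ge> 1" using M2 by simp
      obtain i0 where i0: "(i0, ?t) \<in> E" using cols[of ?t] tp by blast
      have "i0 \<noteq> ?t"
      proof
        assume "i0 = ?t"
        then have "?t = M" using ntt[of ?t] i0 by simp
        then show False using tM by simp
      qed
      then have i0t: "i0 < ?t" using sub[OF i0] by simp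
      have "(i0, ?m) \<in> ?E"
      proof -
        have "(i0, ?t) \<in> E - {(?t, M)}" "gS ?t M (i0, ?t) = (i0, ?m)" using i0 i0t by (auto simp: gS_def)
        then show ?thesis by (metis imageI)
      qed
      then have tq: "topM ?E ?m \<le> ?y" using top_props(4)[OF vE m1] i0t by fastforce
      have ym: "?y < ?m" using tp tM by simp
      have "fS ?y ?m ` ?E = E - {(?t, M)}" using fg by (simp add: image_image)
      moreover have "Suc ?y = ?t" "Suc ?m = M" using t2 M2 by auto
      ultimately have "kid ?m ?E ?y = (M, insert (?t, M) (E - {(?t, M)}))"
        using tq ym unfolding kid_def by auto
      also have "\<dots> = (M, E)" using tp(1) by auto
      finally have k: "kid ?m ?E ?y = (M, E)" .
      have yr: "?y \<in> {1..?m}" using t2 ym by auto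
      show ?thesis unfolding p using vE m1 cardE k yr by force
    next
      case False
      then obtain j1 where j1: "(?t, j1) \<in> E" "j1 \<noteq> M" by blast
      let ?E = "E - {(?t, M)}"
      have p: "parM (M, E) = (M, ?E)" unfolding parM_def prod.case
        by (simp only: if_not_P[OF tM] if_not_P[OF False])
      have vE: "valid M ?E"
        unfolding valid_def
      proof (intro conjI ballI)
        show "?E \<subseteq> {(i, j). 1 \<le> i \<and> i \<le> j \<and> j \<le> M}" using sub by auto
      next
        fix i assume i: "i \<in> {1..M}"
        then have "1 \<le> i \<and> i \<le> M" by auto
        then obtain j where j: "(i, j) \<in> E" using rows[of i] by blast
        show "\<exists>j. (i, j) \<in> ?E"
        proof (cases "i = ?t")
          case True then show ?thesis using j1 by (intro exI[of _ j1]) auto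
        next
          case False then show ?thesis using j by (intro exI[of _ j]) auto
        qed
      next
        fix j assume j: "j \<in> {1..M}"
        show "\<exists>i. (i, j) \<in> ?E"
        proof (cases "j = M")
          case True then show ?thesis using diag tM by (intro exI[of _ M]) auto
        next
          case False
          then have "1 \<le> j \<and> j \<le> M" using j by auto
          then obtain i where i: "(i, j) \<in> E" using cols[of j] by blast
          then show ?thesis using False by (intro exI[of _ i]) auto
        qed
      qed
      have tq: "?t < topM ?E M"
      proof -
        have "(topM ?E M, M) \<in> ?E" using top_props(1)[OF vE M1] .
        then show ?thesis using tp(4) by fastforce
      qed
      have k: "kid M ?E ?t = (M, E)" using tq tp(1) by (auto simp: kid_def insert_absorb)
      have "Suc (card ?E) = card E" by (rule card_Suc_Diff1[OF fin tp(1)])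
      then show ?thesis unfolding p using vE M1 k tp by force
    qed
  qed
  then show "valid (fst (parM (M, E))) (snd (parM (M, E)))" "fst (parM (M, E)) \<ge> 1"
    "Suc (card (snd (parM (M, E)))) = card E"
    "\<exists>q\<in>{1..fst (parM (M, E))}. kid (fst (parM (M, E))) (snd (parM (M, E))) q = (M, E)" by auto
qed


lemma kid_props:
  assumes v: "valid m E" and m: "m \<ge> 1" and q: "q \<in> {1..m}"
  shows "valid (fst (kid m E q)) (snd (kid m E q))" "card (snd (kid m E q)) = Suc (card E)"
    "labM (kid m E q) = (if q \<le> topM E m - 1 then (m, q - 1) else (Suc m, q))"
proof -
  have tp: "1 \<le> topM E m" "topM E m \<le> m" using top_props[OF v m] by auto
  consider "q < topM E m" | "topM E m \<le> q" "q < m" | "topM E m \<le> q" "q = m" using q by fastforce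
  then have "valid (fst (kid m E q)) (snd (kid m E q)) \<and> card (snd (kid m E q)) = Suc (card E) \<and>
    labM (kid m E q) = (if q \<le> topM E m - 1 then (m, q - 1) else (Suc m, q))"
  proof cases
    case 1
    note ks = kid_stay[OF v m _ 1]
    have k: "kid m E q = (m, insert (q, m) E)" using 1 by (simp add: kid_def)
    show ?thesis unfolding k labM_def using ks q 1 by auto
  next
    case 2
    note ks = kid_split[OF v m 2]
    have k: "kid m E q = (Suc m, insert (Suc q, Suc m) (fS q m ` E))" using 2 by (simp add: kid_def)
    show ?thesis unfolding k labM_def using ks q 2 tp by auto
  next
    case 3
    note ks = kid_iso[OF v m]
    have k: "kid m E q = (Suc m, insert (Suc m, Suc m) E)" using 3 by (simp add: kid_def)
    show ?thesis unfolding k labM_def using ks q 3 tp by auto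
  qed
  then show "valid (fst (kid m E q)) (snd (kid m E q))" "card (snd (kid m E q)) = Suc (card E)"
    "labM (kid m E q) = (if q \<le> topM E m - 1 then (m, q - 1) else (Suc m, q))" by auto
qed

lemma card_ge: assumes v: "valid m E" shows "m \<le> card E"
proof -
  define f where "f i = (i, SOME j. (i, j) \<in> E)" for i
  have "\<And>i. i \<in> {1..m} \<Longrightarrow> f i \<in> E"
  proof -
    fix i assume "i \<in> {1..m}"
    then have "\<exists>j. (i, j) \<in> E" using v unfolding valid_def by blast
    then show "f i \<in> E" unfolding f_def by (rule someI_ex)
  qed
  moreover have "inj_on f {1..m}" unfolding f_def by (rule inj_onI) simp
  ultimately have "card {1..m} \<le> card E" using valid_fin[OF v] by (intro card_inj_on_le) auto
  then show ?thesis by simp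
qed

lemma m_pos: "valid m E \<Longrightarrow> card E \<ge> 1 \<Longrightarrow> m \<ge> 1"
proof (rule ccontr)
  assume v: "valid m E" and c: "card E \<ge> 1" and "\<not> m \<ge> 1"
  then have "m = 0" by simp
  then have "E = {}" using valid_sub[OF v] by fastforce
  then show False using c by simp
qed

definition SM :: "nat \<Rightarrow> (nat \<times> (nat \<times> nat) set) set" where
  "SM n = {(m, E). valid m E \<and> card E = Suc n}"

definition chM :: "nat \<times> (nat \<times> nat) set \<Rightarrow> (nat \<times> (nat \<times> nat) set) set" where
  "chM x = (case x of (m, E) \<Rightarrow> kid m E ` {1..m})"

lemma root_M: "SM 1 = {(2, {(1,1),(2,2)})}"
proof (rule set_eqI)
  fix x :: "nat \<times> (nat \<times> nat) set"
  obtain m E where x: "x = (m, E)" by (cases x)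
  show "x \<in> SM 1 \<longleftrightarrow> x \<in> {(2, {(1,1),(2,2)})}"
  proof
    assume "x \<in> SM 1"
    then have v: "valid m E" and c: "card E = 2" unfolding SM_def x by auto
    have m2: "m \<le> 2" using card_ge[OF v] c by simp
    have m1: "m \<ge> 1" using m_pos[OF v] c by simp
    have "m \<noteq> 1"
    proof
      assume "m = 1"
      then have "card E \<le> 1" using card_le_sq[OF v] by simp
      then show False using c by simp
    qed
    then have mm: "m = 2" using m1 m2 by simp
    have d: "(2, 2) \<in> E" using diag_last[OF v] mm by simp
    have "1 \<in> {1..m}" using mm by simp
    then obtain i where "(i, 1) \<in> E" using v unfolding valid_def by blast
    then have d1: "(1, 1) \<in> E" using valid_sub[OF v] by (metis le_antisym)
    have sub: "{(1,1),(2,2)} \<subseteq> E" using d d1 by auto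
    have "{(1::nat,1::nat),(2,2)} = E"
      by (rule card_subset_eq[OF valid_fin[OF v] sub]) (simp add: c)
    then show "x \<in> {(2, {(1,1),(2,2)})}" using x mm by simp
  next
    assume "x \<in> {(2, {(1,1),(2,2)})}"
    then have "m = 2" "E = {(1,1),(2,2)}" using x by auto
    moreover have "valid 2 {(1,1),(2,2)}"
    proof -
      have "{1..2::nat} = {1,2}" by auto
      then show ?thesis unfolding valid_def by auto
    qed
    ultimately show "x \<in> SM 1" unfolding SM_def x by simp
  qed
qed

theorem countM: "card (SM (Suc j)) = G j 2 1"
proof (rule engine[where S = SM and ch = chM and lab = labM and r = "(2, {(1,1),(2,2)})"])
  fix n assume n: "n \<ge> (1::nat)"
  show "SM (Suc n) = (\<Union>x\<in>SM n. chM x)"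
  proof (rule set_eqI, rule iffI)
    fix y assume "y \<in> SM (Suc n)"
    then obtain M E where y: "y = (M, E)" "valid M E" "card E = Suc (Suc n)" unfolding SM_def by auto
    have c3: "card E \<ge> 3" using y n by simp
    note kp = kid_par[OF y(2) c3]
    obtain q where q: "q \<in> {1..fst (parM (M, E))}" "kid (fst (parM (M, E))) (snd (parM (M, E))) q = (M, E)"
      using kp(4) by blast
    have "parM (M, E) \<in> SM n" using kp y unfolding SM_def by (cases "parM (M, E)") auto
    moreover have "y \<in> chM (parM (M, E))"
    proof -
      obtain m' E' where pe: "parM (M, E) = (m', E')" by (cases "parM (M, E)")
      then have "q \<in> {1..m'}" "kid m' E' q = y" using q y by auto
      then show ?thesis unfolding chM_def pe by (auto intro: rev_image_eqI)
    qed
    ultimately show "y \<in> (\<Union>x\<in>SM n. chM x)" by blast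
  next
    fix y assume "y \<in> (\<Union>x\<in>SM n. chM x)"
    then obtain m E q where h: "valid m E" "card E = Suc n" "q \<in> {1..m}" "y = kid m E q"
      unfolding SM_def chM_def by auto
    have m1: "m \<ge> 1" using m_pos[OF h(1)] h(2) by simp
    note kp = kid_props[OF h(1) m1 h(3)]
    show "y \<in> SM (Suc n)" unfolding SM_def using kp h(2,4) by (cases y) auto
  qed
next
  fix n x y assume n: "n \<ge> (1::nat)" and x: "x \<in> SM n" and y: "y \<in> SM n" and xy: "x \<noteq> y"
  obtain m E where px: "x = (m, E)" "valid m E" "card E = Suc n" using x unfolding SM_def by auto
  obtain m' E' where py: "y = (m', E')" "valid m' E'" "card E' = Suc n" using y unfolding SM_def by auto
  have m1: "m \<ge> 1" "m' \<ge> 1" using m_pos[OF px(2)] m_pos[OF py(2)] px(3) py(3) by auto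
  show "chM x \<inter> chM y = {}"
  proof (rule ccontr)
    assume "chM x \<inter> chM y \<noteq> {}"
    then obtain z where z: "z \<in> kid m E ` {1..m}" "z \<in> kid m' E' ` {1..m'}"
      unfolding chM_def px py by auto
    obtain q where q: "q \<in> {1..m}" "z = kid m E q" using z(1) by blast
    obtain q' where q': "q' \<in> {1..m'}" "z = kid m' E' q'" using z(2) by blast
    have qq: "q \<in> {1..m}" "q' \<in> {1..m'}" "kid m E q = kid m' E' q'" using q q' by auto
    then have "parM (kid m E q) = parM (kid m' E' q')" by simp
    then have "(m, E) = (m', E')" using par_kid[OF px(2) m1(1) qq(1)] par_kid[OF py(2) m1(2) qq(2)] by simp
    then show False using xy px py by simp
  qed
next
  fix n x assume "n \<ge> (1::nat)" "x \<in> SM n"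
  show "finite (chM x)" unfolding chM_def by (auto split: prod.splits)
next
  fix n x k assume n: "n \<ge> (1::nat)" and x: "x \<in> SM n"
  obtain m E where px: "x = (m, E)" "valid m E" "card E = Suc n" using x unfolding SM_def by auto
  have m1: "m \<ge> 1" using m_pos[OF px(2)] px(3) by simp
  have tp: "topM E m \<le> m" "1 \<le> topM E m" using top_props[OF px(2) m1] by auto
  have lab: "\<And>q. q \<in> {1..m} \<Longrightarrow> labM (kid m E q) = (if id q \<le> topM E m - 1 then (m, id q - 1) else (Suc m, id q))"
    using kid_props(3)[OF px(2) m1] by simp
  have inj: "inj_on (kid m E) {1..m}"
  proof (rule inj_onI)
    fix a b assume ab: "a \<in> {1..m}" "b \<in> {1..m}" "kid m E a = kid m E b"
    then have "labM (kid m E a) = labM (kid m E b)" by simp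
    then show "a = b" using lab[OF ab(1)] lab[OF ab(2)] ab(1,2) by (auto split: if_splits)
  qed
  have "(\<Sum>c\<in>kid m E ` {1..m}. G k (fst (labM c)) (snd (labM c))) = G (Suc k) m (topM E m - 1)"
    by (rule sumG_bij[where \<phi> = id]) (use inj lab tp in auto)
  then show "(\<Sum>c\<in>chM x. G k (fst (labM c)) (snd (labM c))) = G (Suc k) (fst (labM x)) (snd (labM x))"
    unfolding chM_def px labM_def by simp
next
  show "SM 1 = {(2, {(1,1),(2,2)})}" by (rule root_M)
next
  have "topM {(1,1),(2,2)} 2 = 2" by (rule top_eqI) auto
  then show "labM (2, {(1,1),(2,2)}) = (2, 1)" unfolding labM_def by simp
qed

lemma matrix_bridge:
  "card {(m, A). upper_tri_bin m A \<and> card (ones A) = n + 1 \<and> no_zero_lines m A} = card (SM n)"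
proof -
  let ?X = "{(m, A). upper_tri_bin m A \<and> card (ones A) = n + 1 \<and> no_zero_lines m A}"
  let ?f = "\<lambda>(m, A). (m, ones A)"
  have inj: "inj_on ?f ?X"
  proof (rule inj_onI)
    fix x y assume xy: "x \<in> ?X" "y \<in> ?X" "?f x = ?f y"
    obtain m A where x: "x = (m, A)" by (cases x)
    obtain m' B where y: "y = (m', B)" by (cases y)
    have ut: "upper_tri_bin m A" "upper_tri_bin m' B" using xy x y by auto
    have e: "m = m'" "ones A = ones B" using xy(3) x y by auto
    have "A = B"
    proof (intro ext)
      fix i j
      have "A i j \<in> {0, 1}" "B i j \<in> {0, 1}" using ut unfolding upper_tri_bin_def by auto
      moreover have "A i j = 1 \<longleftrightarrow> B i j = 1"
      proof -
        have "(i, j) \<in> ones A \<longleftrightarrow> (i, j) \<in> ones B" using e(2) by simp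
        then show ?thesis unfolding ones_def by simp
      qed
      ultimately show "A i j = B i j" by auto
    qed
    then show "x = y" using x y e by simp
  qed
  have im: "?f ` ?X = SM n"
  proof (rule set_eqI, rule iffI)
    fix z assume "z \<in> ?f ` ?X"
    then obtain m A where z: "z = (m, ones A)" "upper_tri_bin m A" "card (ones A) = n + 1" "no_zero_lines m A"
      by auto
    have "ones A \<subseteq> {(i, j). 1 \<le> i \<and> i \<le> j \<and> j \<le> m}"
    proof
      fix x assume "x \<in> ones A"
      then obtain i j where x: "x = (i, j)" "A i j = 1" unfolding ones_def by auto
      have u1: "\<And>i j. \<not> (1 \<le> i \<and> i \<le> m \<and> 1 \<le> j \<and> j \<le> m) \<Longrightarrow> A i j = 0"
        and u2: "\<And>i j. j < i \<Longrightarrow> A i j = 0" using z(2) unfolding upper_tri_bin_def by simp_all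
      have "1 \<le> i \<and> i \<le> m \<and> 1 \<le> j \<and> j \<le> m" using u1[of i j] x(2) by (cases "1 \<le> i \<and> i \<le> m \<and> 1 \<le> j \<and> j \<le> m") auto
      moreover have "\<not> j < i"
      proof
        assume "j < i" then have "A i j = 0" by (rule u2)
        then show False using x(2) by simp
      qed
      ultimately show "x \<in> {(i, j). 1 \<le> i \<and> i \<le> j \<and> j \<le> m}" using x by auto
    qed
    moreover have "\<forall>i\<in>{1..m}. \<exists>j. (i, j) \<in> ones A" "\<forall>j\<in>{1..m}. \<exists>i. (i, j) \<in> ones A"
    proof -
      have r1: "\<forall>i\<in>{1..m}. \<exists>j\<in>{1..m}. A i j = 1" and r2: "\<forall>j\<in>{1..m}. \<exists>i\<in>{1..m}. A i j = 1"
        using z(4) unfolding no_zero_lines_def by simp_all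
      have o: "\<And>i j. (i, j) \<in> ones A \<longleftrightarrow> A i j = 1" unfolding ones_def by simp
      show "\<forall>i\<in>{1..m}. \<exists>j. (i, j) \<in> ones A" using r1 unfolding o by meson
      show "\<forall>j\<in>{1..m}. \<exists>i. (i, j) \<in> ones A" using r2 unfolding o by meson
    qed
    ultimately show "z \<in> SM n" unfolding SM_def valid_def using z by auto
  next
    fix z assume "z \<in> SM n"
    then obtain m E where z: "z = (m, E)" "valid m E" "card E = Suc n" unfolding SM_def by auto
    define A where "A i j = (if (i, j) \<in> E then 1 else 0 :: nat)" for i j
    have oA: "ones A = E" unfolding ones_def A_def by auto
    have vs: "\<And>i j. (i, j) \<in> E \<Longrightarrow> 1 \<le> i \<and> i \<le> j \<and> j \<le> m" using valid_sub[OF z(2)] by blast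
    have "upper_tri_bin m A" unfolding upper_tri_bin_def
    proof (intro conjI allI impI)
      fix i j
      show "A i j \<in> {0, 1}" by (simp add: A_def)
      show "\<not> (1 \<le> i \<and> i \<le> m \<and> 1 \<le> j \<and> j \<le> m) \<Longrightarrow> A i j = 0"
        using vs[of i j] by (auto simp: A_def)
      show "j < i \<Longrightarrow> A i j = 0" using vs[of i j] by (auto simp: A_def)
    qed
    moreover have "no_zero_lines m A" unfolding no_zero_lines_def
    proof (intro conjI ballI)
      fix i assume i: "i \<in> {1..m}"
      then obtain j where j: "(i, j) \<in> E" using z(2) unfolding valid_def by blast
      then show "\<exists>j\<in>{1..m}. A i j = 1" using vs[OF j] by (intro bexI[of _ j]) (auto simp: A_def)
    next
      fix j assume j: "j \<in> {1..m}"
      then obtain i where i: "(i, j) \<in> E" using z(2) unfolding valid_def by blast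
      then show "\<exists>i\<in>{1..m}. A i j = 1" using vs[OF i] by (intro bexI[of _ i]) (auto simp: A_def)
    qed
    ultimately have "(m, A) \<in> ?X" using oA z by simp
    then show "z \<in> ?f ` ?X" using oA z by (intro image_eqI[of _ _ "(m, A)"]) auto
  qed
  show ?thesis using card_image[OF inj] im by simp
qed


theorem mainTheorem7:
  fixes n :: nat
  assumes "n \<ge> 1"
  shows "card {\<pi>. \<pi> permutes {1..n} \<and> avoids_bv n \<pi> [3,2,1] {1} {1}}
           = card {(m, A). upper_tri_bin m A \<and> card (ones A) = n + 1 \<and> no_zero_lines m A}
       \<and> card {\<pi>. \<pi> permutes {1..n} \<and> avoids_bv n \<pi> [3,2,1] {1} {1}}
           = card {\<pi>. \<pi> permutes {1..n+1} \<and> avoids_bv (n+1) \<pi> [2,3,1] {1} {1}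
                      \<and> avoids_bv (n+1) \<pi> [2,1] {1} {1}}"
proof -
  obtain j where nj: "n = Suc j" using assms by (cases n) auto
  have e1: "{\<pi>. \<pi> permutes {1..n} \<and> avoids_bv n \<pi> [3,2,1] {1} {1}} = {\<pi>. \<pi> permutes {1..Suc j} \<and> avP (Suc j) \<pi>}"
    unfolding nj avoid321_iff avP_def by simp
  have e2: "{\<pi>. \<pi> permutes {1..n+1} \<and> avoids_bv (n+1) \<pi> [2,3,1] {1} {1} \<and> avoids_bv (n+1) \<pi> [2,1] {1} {1}}
      = {\<sigma>. \<sigma> permutes {1..Suc (Suc j)} \<and> avQ (Suc (Suc j)) \<sigma>}"
    unfolding nj avoid231_iff avoid21_iff avQ_def by auto
  have c1: "card {\<pi>. \<pi> permutes {1..n} \<and> avoids_bv n \<pi> [3,2,1] {1} {1}} = G j 2 1"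
    unfolding e1 by (rule countP)
  have c2: "card {(m, A). upper_tri_bin m A \<and> card (ones A) = n + 1 \<and> no_zero_lines m A} = G j 2 1"
    using matrix_bridge[of n] countM[of j] nj by simp
  have c3: "card {\<pi>. \<pi> permutes {1..n+1} \<and> avoids_bv (n+1) \<pi> [2,3,1] {1} {1} \<and> avoids_bv (n+1) \<pi> [2,1] {1} {1}} = G j 2 1"
    unfolding e2 by (rule countQ)
  show ?thesis using c1 c2 c3 by simp
qed

end
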